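(* Suppose Assumption A2 holds, $F^*>-\infty$, and $x^k$ is generated by Algorithm (2-RCD) with the pair $\{i_k,j_k\}$ drawn i.i.d. uniformly among the $N(N-1)/2$ unordered pairs of distinct indices. Then: (i) the sequence of random variables $M_2(x^k,\Gamma)$ converges to $0$ almost surely, and $F(x^k)$ converges almost surely to some random variable $\bar F$; (ii) every accumulation point of $x^k$ is a stationary point of problem $\min\{F(x): a^Tx=b\}$, i.e. a feasible point $x^*$ for which there exists $\lambda^*\in\mathbb{R}$ with $0\in\nabla f(x^* )+\partial h(x^* )+\lambda^*a$.
   Context: Block structure: $n=\sum_{i=1}^N n_i$ with $N\ge2$, $I_n=[U_1\ \dots\ U_N]$, $x_i=U_i^Tx$, $\nabla_if(x)=U_i^T\nabla f(x)$, $a_i=U_i^Ta$; for $i\ne j$, $s_{ij}=[s_i^T\ s_j^T]^T$, $\nabla_{ij}f(x)=[\nabla_if(x)^T\ \nabla_jf(x)^T]^T$, and $x+s_{ij}$ means $x+U_is_i+U_js_j$. Problem: $F^*=\min\{F(x):=f(x)+h(x):\ a^Tx=b\}$ with $a\in\mathbb{R}^n$ nonzero. Assumption A2: (i) $f$ is differentiable and there are constants $L_{ij}=L_{ji}>0$ with $\|\nabla_{ij}f(x+U_is_i+U_js_j)-\nabla_{ij}f(x)\|\le L_{ij}\|s_{ij}\|$ for all $s_{ij}$, $x$, $i,j=1,\dots,N$; (ii) $h$ is proper, convex, continuous, $h(x)=\sum_{i=1}^n h_i(x_i)$ with each $h_i:\mathbb{R}\to\mathbb{R}$ convex. Algorithm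 (2-RCD): given $x^0$ with $a^Tx^0=b$, for $k\ge0$ choose randomly a pair $(i_k,j_k)$, $i_k\ne j_k$, compute $d_{i_kj_k}=\arg\min\{ f(x^k)+\langle\nabla_{i_kj_k}f(x^k),s_{i_kj_k}\rangle+\frac{L_{i_kj_k}}{2}\|s_{i_kj_k}\|^2+h(x^k+s_{i_kj_k}) :\ a_{i_k}^Ts_{i_k}+a_{j_k}^Ts_{j_k}=0\}$, and set $x^{k+1}=x^k+U_{i_k}d_{i_k}+U_{j_k}d_{j_k}$. Notation: $\Gamma_i=\frac1N\sum_{j=1}^N L_{ij}$. For $\Lambda\in\mathbb{R}^N$ with positive entries, $\|x\|_\Lambda=(\sum_i\Lambda_i\|x_i\|^2)^{1/2}$, $\|y\|_\Lambda^*=(\sum_i\Lambda_i^{-1}\|y_i\|^2)^{1/2}$, $D_\Lambda=\mathrm{diag}(\Lambda_1I_{n_1},\dots,\Lambda_NI_{n_N})$, $S=\{s:a^Ts=0\}$, $d_\Lambda(x)=\arg\min_{s\in S} f(x)+\langle\nabla f(x),s\rangle+\frac12\|s\|_\Lambda^2+h(x+s)$. Optimality measure: $M_2(x,\Gamma)=\|D_\Gamma\,d_{N\Gamma}(x)\|_\Gamma^*$. *)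

theory Defs
  imports "HOL-Probability.Probability"
begin

text \<open>Coordinates of R^n are indexed by a finite type 'n; blk c is the block (in 0..<N)
  that coordinate c belongs to.  Blocks are 0-based.\<close>

definition supported_in :: "('n::finite \<Rightarrow> nat) \<Rightarrow> nat set \<Rightarrow> real^'n \<Rightarrow> bool" where
  "supported_in blk B s \<longleftrightarrow> (\<forall>c. blk c \<notin> B \<longrightarrow> s $ c = 0)"

definition blk_norm :: "('n::finite \<Rightarrow> nat) \<Rightarrow> nat set \<Rightarrow> real^'n \<Rightarrow> real" where
  "blk_norm blk B v = sqrt (\<Sum>c\<in>{c. blk c \<in> B}. (v $ c)^2)"

definition sep_fun :: "('n::finite \<Rightarrow> real \<Rightarrow> real) \<Rightarrow> real^'n \<Rightarrow> real" where
  "sep_fun hc x = (\<Sum>c\<in>UNIV. hc c (x $ c))"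

definition rcd_dir :: "(real^'n \<Rightarrow> real) \<Rightarrow> (real^'n \<Rightarrow> real^'n) \<Rightarrow> ('n::finite \<Rightarrow> real \<Rightarrow> real)
    \<Rightarrow> (nat \<Rightarrow> nat \<Rightarrow> real) \<Rightarrow> ('n \<Rightarrow> nat) \<Rightarrow> real^'n \<Rightarrow> real^'n \<Rightarrow> nat \<Rightarrow> nat \<Rightarrow> real^'n" where
  "rcd_dir f g hc L blk a x i j =
    (let obj = (\<lambda>t. f x + g x \<bullet> t + L i j / 2 * (norm t)^2 + sep_fun hc (x + t))
     in THE s. supported_in blk {i, j} s \<and> a \<bullet> s = 0 \<and>
          (\<forall>t. supported_in blk {i, j} t \<and> a \<bullet> t = 0 \<longrightarrow> obj s \<le> obj t))"

text \<open>Iterates of 2-RCD along a sample path omega (omega !! k is the unordered pair drawn at step k).\<close>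
primrec rcd_iter :: "(real^'n \<Rightarrow> real) \<Rightarrow> (real^'n \<Rightarrow> real^'n) \<Rightarrow> ('n::finite \<Rightarrow> real \<Rightarrow> real)
    \<Rightarrow> (nat \<Rightarrow> nat \<Rightarrow> real) \<Rightarrow> ('n \<Rightarrow> nat) \<Rightarrow> real^'n \<Rightarrow> real^'n \<Rightarrow> nat set stream \<Rightarrow> nat \<Rightarrow> real^'n" where
  "rcd_iter f g hc L blk a x0 \<omega> 0 = x0"
| "rcd_iter f g hc L blk a x0 \<omega> (Suc k) =
     (let x = rcd_iter f g hc L blk a x0 \<omega> k
      in x + rcd_dir f g hc L blk a x (Min (\<omega> !! k)) (Max (\<omega> !! k)))"

definition wnorm :: "('n::finite \<Rightarrow> nat) \<Rightarrow> (nat \<Rightarrow> real) \<Rightarrow> real^'n \<Rightarrow> real" where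
  "wnorm blk \<Lambda> x = sqrt (\<Sum>c\<in>UNIV. \<Lambda> (blk c) * (x $ c)^2)"

definition wnorm_dual :: "('n::finite \<Rightarrow> nat) \<Rightarrow> (nat \<Rightarrow> real) \<Rightarrow> real^'n \<Rightarrow> real" where
  "wnorm_dual blk \<Lambda> y = sqrt (\<Sum>c\<in>UNIV. (y $ c)^2 / \<Lambda> (blk c))"

definition Dmat :: "('n::finite \<Rightarrow> nat) \<Rightarrow> (nat \<Rightarrow> real) \<Rightarrow> real^'n \<Rightarrow> real^'n" where
  "Dmat blk \<Lambda> x = (\<chi> c. \<Lambda> (blk c) * x $ c)"

definition d_Lam :: "(real^'n \<Rightarrow> real) \<Rightarrow> (real^'n \<Rightarrow> real^'n) \<Rightarrow> ('n::finite \<Rightarrow> real \<Rightarrow> real)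
    \<Rightarrow> ('n \<Rightarrow> nat) \<Rightarrow> real^'n \<Rightarrow> (nat \<Rightarrow> real) \<Rightarrow> real^'n \<Rightarrow> real^'n" where
  "d_Lam f g hc blk a \<Lambda> x =
    (let obj = (\<lambda>t. f x + g x \<bullet> t + 1/2 * (wnorm blk \<Lambda> t)^2 + sep_fun hc (x + t))
     in THE s. a \<bullet> s = 0 \<and> (\<forall>t. a \<bullet> t = 0 \<longrightarrow> obj s \<le> obj t))"

definition Gamma :: "nat \<Rightarrow> (nat \<Rightarrow> nat \<Rightarrow> real) \<Rightarrow> nat \<Rightarrow> real" where
  "Gamma N L i = (1 / real N) * (\<Sum>j<N. L i j)"

definition M2 :: "(real^'n \<Rightarrow> real) \<Rightarrow> (real^'n \<Rightarrow> real^'n) \<Rightarrow> ('n::finite \<Rightarrow> real \<Rightarrow> real)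
    \<Rightarrow> ('n \<Rightarrow> nat) \<Rightarrow> real^'n \<Rightarrow> nat \<Rightarrow> (nat \<Rightarrow> nat \<Rightarrow> real) \<Rightarrow> real^'n \<Rightarrow> real" where
  "M2 f g hc blk a N L x =
    wnorm_dual blk (Gamma N L)
      (Dmat blk (Gamma N L) (d_Lam f g hc blk a (\<lambda>i. real N * Gamma N L i) x))"

definition subdiff :: "('a::real_inner \<Rightarrow> real) \<Rightarrow> 'a \<Rightarrow> 'a set" where
  "subdiff h x = {v. \<forall>y. h x + v \<bullet> (y - x) \<le> h y}"

definition stationary :: "(real^'n \<Rightarrow> real^'n) \<Rightarrow> (real^'n \<Rightarrow> real) \<Rightarrow> real^'n \<Rightarrow> real \<Rightarrow> real^'n \<Rightarrow> bool" where
  "stationary g h a b x \<longleftrightarrow> a \<bullet> x = b \<and>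
     (\<exists>lam::real. \<exists>v \<in> subdiff h x. g x + v + lam *\<^sub>R a = 0)"

end

theory Submission
  imports Defs
begin
lemma convex1_lower:
  fixes \<phi> :: "real \<Rightarrow> real"
  assumes cv: "convex_on UNIV \<phi>"
  shows "\<phi> (y + u) \<ge> \<phi> y - (\<bar>\<phi> (y+1) - \<phi> y\<bar> + \<bar>\<phi> y - \<phi> (y-1)\<bar>) * \<bar>u\<bar>"
proof (cases "u \<ge> 0")
  case True
  define K where "K = \<bar>\<phi> (y+1) - \<phi> y\<bar> + \<bar>\<phi> y - \<phi> (y-1)\<bar>"
  define t where "t = 1 / (1 + u)"
  have t0: "0 \<le> t" "t \<le> 1" using True by (auto simp: t_def field_simps)
  have tt: "t * (1 + u) = 1" using True by (simp add: t_def)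
  have "y = (1 - t) *\<^sub>R (y - 1) + t *\<^sub>R (y + u)"
    using tt by (simp add: algebra_simps)
  hence "\<phi> y \<le> (1 - t) * \<phi> (y - 1) + t * \<phi> (y + u)"
    using convex_onD[OF cv t0] by (metis UNIV_I)
  hence "(1+u) * \<phi> y \<le> (1+u) * ((1 - t) * \<phi> (y - 1) + t * \<phi> (y + u))"
    using True by (intro mult_left_mono) auto
  also have "\<dots> = (1+u) * \<phi> (y - 1) - (t*(1+u)) * \<phi> (y - 1) + (t*(1+u)) * \<phi> (y + u)"
    by (simp add: algebra_simps)
  also have "\<dots> = (1+u) * \<phi> (y - 1) - 1 * \<phi> (y - 1) + 1 * \<phi> (y + u)"
    by (simp only: tt)
  also have "\<dots> = u * \<phi> (y - 1) + \<phi> (y + u)"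
    by (simp add: algebra_simps)
  finally have 1: "(1+u) * \<phi> y \<le> u * \<phi> (y - 1) + \<phi> (y + u)" .
  have k: "- (\<phi> y - \<phi> (y-1)) \<le> K" unfolding K_def by linarith
  have "- (\<phi> y - \<phi> (y-1)) * u \<le> K * u" by (rule mult_right_mono[OF k True])
  thus ?thesis using 1 True unfolding K_def[symmetric] by (simp add: algebra_simps)
next
  case False
  define K where "K = \<bar>\<phi> (y+1) - \<phi> y\<bar> + \<bar>\<phi> y - \<phi> (y-1)\<bar>"
  define v where "v = - u"
  have v0: "v \<ge> 0" using False by (simp add: v_def)
  define t where "t = 1 / (1 + v)"
  have t0: "0 \<le> t" "t \<le> 1" using v0 by (auto simp: t_def field_simps)
  have tt: "t * (1 + v) = 1" using v0 by (simp add: t_def)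
  have "y = (1 - t) *\<^sub>R (y + 1) + t *\<^sub>R (y + u)"
    using tt by (simp add: v_def algebra_simps)
  hence "\<phi> y \<le> (1 - t) * \<phi> (y + 1) + t * \<phi> (y + u)"
    using convex_onD[OF cv t0] by (metis UNIV_I)
  hence "(1+v) * \<phi> y \<le> (1+v) * ((1 - t) * \<phi> (y + 1) + t * \<phi> (y + u))"
    using v0 by (intro mult_left_mono) auto
  also have "\<dots> = (1+v) * \<phi> (y + 1) - (t*(1+v)) * \<phi> (y + 1) + (t*(1+v)) * \<phi> (y + u)"
    by (simp add: algebra_simps)
  also have "\<dots> = (1+v) * \<phi> (y + 1) - 1 * \<phi> (y + 1) + 1 * \<phi> (y + u)"
    by (simp only: tt)
  also have "\<dots> = v * \<phi> (y + 1) + \<phi> (y + u)"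
    by (simp add: algebra_simps)
  finally have 1: "(1+v) * \<phi> y \<le> v * \<phi> (y + 1) + \<phi> (y + u)" .
  have k: "(\<phi> (y+1) - \<phi> y) \<le> K" unfolding K_def by linarith
  have "(\<phi> (y+1) - \<phi> y) * v \<le> K * v" by (rule mult_right_mono[OF k v0])
  moreover have "\<bar>u\<bar> = v" using False by (simp add: v_def)
  ultimately show ?thesis using 1 unfolding K_def[symmetric] by (simp add: algebra_simps)
qed

lemma norm_sq_vec: "(norm (t::real^'n::finite))^2 = (\<Sum>c\<in>UNIV. (t$c)^2)"
proof -
  have "(norm t)^2 = inner t t" by (simp add: power2_norm_eq_inner)
  also have "\<dots> = (\<Sum>c\<in>UNIV. (t$c)^2)" by (simp add: inner_vec_def power2_eq_square)
  finally show ?thesis .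
qed

lemma sep_fun_cont:
  assumes "\<forall>c. convex_on UNIV (hc c)"
  shows "continuous_on UNIV (sep_fun hc :: real^'n::finite \<Rightarrow> real)"
proof -
  have hc: "continuous_on UNIV (hc c)" for c
    using convex_on_continuous[of UNIV "hc c"] assms by auto
  have lin: "continuous_on UNIV (\<lambda>x::real^'n. x $ c)" for c
    by (simp add: linear_continuous_on bounded_linear_vec_nth)
  have "continuous_on UNIV (\<lambda>x::real^'n. hc c (x $ c))" for c
    by (rule continuous_on_compose2[OF hc[of c] lin]) auto
  thus ?thesis unfolding sep_fun_def by (intro continuous_on_sum) auto
qed

lemma sep_lower:
  assumes hconv: "\<forall>c. convex_on UNIV (hc c)"
  shows "\<exists>Ks\<ge>0. \<forall>t. sep_fun hc (x + t) \<ge> sep_fun hc (x::real^'n::finite) - Ks * norm t"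
proof -
  define Kc where "Kc c = \<bar>hc c (x$c+1) - hc c (x$c)\<bar> + \<bar>hc c (x$c) - hc c (x$c - 1)\<bar>" for c
  have Kc0: "Kc c \<ge> 0" for c unfolding Kc_def by simp
  have "sep_fun hc (x + t) \<ge> sep_fun hc x - (\<Sum>c\<in>UNIV. Kc c) * norm t" for t
  proof -
    have "hc c ((x+t)$c) \<ge> hc c (x$c) - Kc c * norm t" for c
    proof -
      have "hc c (x$c + t$c) \<ge> hc c (x$c) - Kc c * \<bar>t$c\<bar>"
        using convex1_lower[OF hconv[rule_format, of c], of "x$c" "t$c"] unfolding Kc_def by simp
      moreover have "Kc c * \<bar>t$c\<bar> \<le> Kc c * norm t"
        by (rule mult_left_mono[OF component_le_norm_cart Kc0])
      ultimately show ?thesis by simp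
    qed
    hence "(\<Sum>c\<in>UNIV. hc c (x$c) - Kc c * norm t) \<le> (\<Sum>c\<in>UNIV. hc c ((x+t)$c))"
      by (intro sum_mono) auto
    thus ?thesis unfolding sep_fun_def by (simp add: sum_subtractf sum_distrib_right)
  qed
  moreover have "(\<Sum>c\<in>UNIV. Kc c) \<ge> 0" by (intro sum_nonneg) (simp add: Kc0)
  ultimately show ?thesis by blast
qed

lemma sep_mid:
  assumes hconv: "\<forall>c. convex_on UNIV (hc c)"
  shows "sep_fun hc ((1/2) *\<^sub>R (y + z)) \<le> (sep_fun hc y + sep_fun hc (z::real^'n::finite)) / 2"
proof -
  have "hc c ((1/2) * (y$c + z$c)) \<le> (hc c (y$c) + hc c (z$c)) / 2" for c
  proof -
    have "hc c ((1 - 1/2) *\<^sub>R (y$c) + (1/2) *\<^sub>R (z$c)) \<le> (1 - 1/2) * hc c (y$c) + (1/2) * hc c (z$c)"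
      by (rule convex_onD[OF hconv[rule_format]]) auto
    thus ?thesis by (simp add: algebra_simps)
  qed
  hence "(\<Sum>c\<in>UNIV. hc c ((1/2) * (y$c + z$c))) \<le> (\<Sum>c\<in>UNIV. (hc c (y$c) + hc c (z$c)) / 2)"
    by (intro sum_mono) auto
  also have "\<dots> = ((\<Sum>c\<in>UNIV. hc c (y$c)) + (\<Sum>c\<in>UNIV. hc c (z$c))) / 2"
    by (simp add: sum_divide_distrib[symmetric] sum.distrib)
  finally show ?thesis unfolding sep_fun_def by simp
qed

lemma argmin_ex1:
  fixes K :: "(real^'n::finite) set" and \<phi> :: "real^'n \<Rightarrow> real"
  assumes K: "subspace K" and w: "\<forall>c. w c > 0" and hconv: "\<forall>c. convex_on UNIV (hc c)"
    and phi: "\<And>t. \<phi> t = c0 + v \<bullet> t + (\<Sum>c\<in>UNIV. w c * (t$c)^2) + sep_fun hc (x+t)"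
  shows "\<exists>!s. s \<in> K \<and> (\<forall>t\<in>K. \<phi> s \<le> \<phi> t)"
proof -
  define wm where "wm = Min (range w)"
  have wm0: "wm > 0" unfolding wm_def using w by (subst Min_gr_iff) auto
  have wmle: "wm \<le> w c" for c unfolding wm_def by (rule Min_le) auto
  obtain Ks where Ks: "Ks \<ge> 0" "\<And>t. sep_fun hc (x + t) \<ge> sep_fun hc x - Ks * norm t"
    using sep_lower[OF hconv, of x] by blast
  define B where "B = norm v + Ks"
  have B0: "B \<ge> 0" using Ks by (simp add: B_def)
  have lower: "\<phi> t \<ge> \<phi> 0 - B * norm t + wm * (norm t)^2" for t
  proof -
    have q: "(\<Sum>c\<in>UNIV. w c * (t$c)^2) \<ge> wm * (norm t)^2"
    proof -
      have "(\<Sum>c\<in>UNIV. wm * (t$c)^2) \<le> (\<Sum>c\<in>UNIV. w c * (t$c)^2)"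
        by (intro sum_mono mult_right_mono) (auto simp: wmle)
      thus ?thesis by (simp add: norm_sq_vec sum_distrib_left)
    qed
    have l: "v \<bullet> t \<ge> - (norm v * norm t)"
      using norm_cauchy_schwarz[of "-v" t] by simp
    show ?thesis using q l Ks(2)[of t] by (simp add: phi B_def algebra_simps)
  qed
  define R where "R = B / wm + 1"
  have R1: "R \<ge> 1" using B0 wm0 by (simp add: R_def)
  have far: "\<phi> t > \<phi> 0" if "norm t > R" for t
  proof -
    have "wm * norm t - B > wm * R - B" using that wm0 by simp
    also have "wm * R - B = wm" using wm0 by (simp add: R_def field_simps)
    finally have "norm t * (wm * norm t - B) > 0" using that R1 wm0 by (intro mult_pos_pos) auto
    thus ?thesis using lower[of t] by (simp add: algebra_simps power2_eq_square)
  qed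
  have cont: "continuous_on UNIV \<phi>"
  proof -
    have sc: "continuous_on UNIV (\<lambda>t. sep_fun hc (x + t))"
      by (rule continuous_on_compose2[OF sep_fun_cont[OF hconv]]) (auto intro!: continuous_intros)
    have lin: "continuous_on UNIV (\<lambda>t::real^'n. t $ c)" for c
      by (simp add: linear_continuous_on bounded_linear_vec_nth)
    have "continuous_on UNIV (\<lambda>t. c0 + v \<bullet> t + (\<Sum>c\<in>UNIV. w c * (t$c)^2) + sep_fun hc (x+t))"
      by (intro continuous_on_add continuous_on_sum continuous_on_mult continuous_on_power
          continuous_on_const continuous_on_inner continuous_on_id lin sc)
    thus ?thesis by (simp add: phi[abs_def])
  qed
  have cK: "closed K" using K by (rule closed_subspace)
  have "compact (cball 0 R \<inter> K)" by (intro compact_Int_closed compact_cball cK)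
  moreover have "0 \<in> cball 0 R \<inter> K" using R1 subspace_0[OF K] by auto
  hence "cball 0 R \<inter> K \<noteq> {}" by blast
  ultimately obtain s where s: "s \<in> cball 0 R \<inter> K" "\<forall>y\<in>cball 0 R \<inter> K. \<phi> s \<le> \<phi> y"
    using continuous_attains_inf[of "cball 0 R \<inter> K" \<phi>] continuous_on_subset[OF cont] by blast
  have smin: "s \<in> K \<and> (\<forall>t\<in>K. \<phi> s \<le> \<phi> t)"
  proof (intro conjI ballI)
    show "s \<in> K" using s by auto
    fix t assume t: "t \<in> K"
    show "\<phi> s \<le> \<phi> t"
    proof (cases "norm t \<le> R")
      case True thus ?thesis using s t by auto
    next
      case False
      have "\<phi> s \<le> \<phi> 0" using s R1 subspace_0[OF K] by auto
      thus ?thesis using far[of t] False by auto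
    qed
  qed
  moreover have "s1 = s2" if s1: "s1 \<in> K \<and> (\<forall>t\<in>K. \<phi> s1 \<le> \<phi> t)"
      and s2: "s2 \<in> K \<and> (\<forall>t\<in>K. \<phi> s2 \<le> \<phi> t)" for s1 s2
  proof -
    define m where "m = (1/2) *\<^sub>R (s1 + s2)"
    have mK: "m \<in> K" unfolding m_def using s1 s2 K by (intro subspace_scale subspace_add) auto
    have hm: "sep_fun hc (x + m) \<le> (sep_fun hc (x + s1) + sep_fun hc (x + s2)) / 2"
    proof -
      have "x + m = (1/2) *\<^sub>R ((x + s1) + (x + s2))" by (simp add: m_def vec_eq_iff field_simps)
      thus ?thesis using sep_mid[OF hconv, of "x+s1" "x+s2"] by simp
    qed
    have qm: "(\<Sum>c\<in>UNIV. w c * (m$c)^2) + (\<Sum>c\<in>UNIV. w c * ((s1-s2)$c)^2) / 4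
        = ((\<Sum>c\<in>UNIV. w c * (s1$c)^2) + (\<Sum>c\<in>UNIV. w c * (s2$c)^2)) / 2"
    proof -
      have tw: "w c * (m$c)^2 + w c * ((s1-s2)$c)^2 / 4 = (w c * (s1$c)^2 + w c * (s2$c)^2) / 2" for c
        by (simp add: m_def power2_eq_square field_simps)
      have "(\<Sum>c\<in>UNIV. w c * (m$c)^2) + (\<Sum>c\<in>UNIV. w c * ((s1-s2)$c)^2) / 4
          = (\<Sum>c\<in>UNIV. w c * (m$c)^2 + w c * ((s1-s2)$c)^2 / 4)"
        by (simp add: sum.distrib sum_divide_distrib)
      also have "\<dots> = (\<Sum>c\<in>UNIV. (w c * (s1$c)^2 + w c * (s2$c)^2) / 2)" by (rule sum.cong[OF refl tw])
      also have "\<dots> = ((\<Sum>c\<in>UNIV. w c * (s1$c)^2) + (\<Sum>c\<in>UNIV. w c * (s2$c)^2)) / 2"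
        by (simp only: sum_divide_distrib[symmetric] sum.distrib)
      finally show ?thesis .
    qed
    have lm: "v \<bullet> m = (v \<bullet> s1 + v \<bullet> s2) / 2" by (simp add: m_def inner_add_right)
    have "\<phi> m + (\<Sum>c\<in>UNIV. w c * ((s1-s2)$c)^2) / 4 \<le> (\<phi> s1 + \<phi> s2) / 2"
      using hm qm lm by (simp add: phi)
    moreover have "\<phi> s1 \<le> \<phi> m" "\<phi> s2 \<le> \<phi> m" using s1 s2 mK by auto
    ultimately have "(\<Sum>c\<in>UNIV. w c * ((s1-s2)$c)^2) \<le> 0" by simp
    moreover have nn: "\<forall>c\<in>UNIV. 0 \<le> w c * ((s1-s2)$c)^2" using w by (simp add: less_imp_le)
    ultimately have "(\<Sum>c\<in>UNIV. w c * ((s1-s2)$c)^2) = 0" using sum_nonneg[of UNIV] by (meson antisym nn sum_nonneg)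
    hence "\<forall>c\<in>UNIV. w c * ((s1-s2)$c)^2 = 0" using sum_nonneg_eq_0_iff[of UNIV "\<lambda>c. w c * ((s1-s2)$c)^2"] nn by simp
    thus ?thesis using w by (auto simp: vec_eq_iff) (metis less_irrefl)
  qed
  ultimately show ?thesis by blast
qed

lemma inner_supp:
  assumes "supported_in blk B d"
  shows "u \<bullet> d \<le> blk_norm blk B u * norm (d::real^'n::finite)"
proof -
  define r where "r = (\<chi> c. if blk c \<in> B then u$c else 0)"
  have "u \<bullet> d = r \<bullet> d"
    using assms unfolding r_def supported_in_def inner_vec_def
    by (intro sum.cong) auto
  also have "\<dots> \<le> norm r * norm d" by (rule norm_cauchy_schwarz)
  also have "norm r = blk_norm blk B u"
  proof -
    have "(norm r)^2 = (\<Sum>c\<in>UNIV. (if blk c \<in> B then (u$c)^2 else 0))"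
      unfolding norm_sq_vec r_def by (intro sum.cong) auto
    also have "\<dots> = (\<Sum>c\<in>{c. blk c \<in> B}. (u$c)^2)"
      by (simp add: sum.If_cases Int_def)
    finally have "norm r = sqrt (\<Sum>c\<in>{c. blk c \<in> B}. (u$c)^2)"
      by (metis norm_ge_zero real_sqrt_unique)
    thus ?thesis by (simp add: blk_norm_def)
  qed
  finally show ?thesis .
qed

lemma supported_scale: "supported_in blk B d \<Longrightarrow> supported_in blk B (r *\<^sub>R d)"
  by (simp add: supported_in_def)

lemma descent:
  fixes f :: "real^'n::finite \<Rightarrow> real"
  assumes grad: "\<forall>x. (f has_derivative (\<lambda>v. g x \<bullet> v)) (at x)"
    and Lip: "\<forall>x s. supported_in blk B s \<longrightarrow> blk_norm blk B (g (x + s) - g x) \<le> l * norm s"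
    and supp: "supported_in blk B d"
  shows "f (x + d) \<le> f x + g x \<bullet> d + l / 2 * (norm d)^2"
proof -
  define \<phi> where "\<phi> \<theta> = f (x + \<theta> *\<^sub>R d) - \<theta> * (g x \<bullet> d) - \<theta>^2 * (l/2) * (norm d)^2" for \<theta>
  have D: "DERIV \<phi> \<theta> :> (g (x + \<theta> *\<^sub>R d) \<bullet> d - g x \<bullet> d - \<theta> * l * (norm d)^2)" for \<theta>
  proof -
    have l1: "((\<lambda>\<theta>. x + \<theta> *\<^sub>R d) has_derivative (\<lambda>h. h *\<^sub>R d)) (at \<theta>)"
      by (auto intro!: derivative_eq_intros)
    have "((\<lambda>\<theta>. f (x + \<theta> *\<^sub>R d)) has_derivative (\<lambda>h. g (x + \<theta> *\<^sub>R d) \<bullet> (h *\<^sub>R d))) (at \<theta>)"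
      using has_derivative_compose[OF l1 grad[rule_format]] by simp
    hence "DERIV (\<lambda>\<theta>. f (x + \<theta> *\<^sub>R d)) \<theta> :> (g (x + \<theta> *\<^sub>R d) \<bullet> d)"
      by (rule has_derivative_imp_has_field_derivative) simp
    thus ?thesis unfolding \<phi>_def
      by (auto intro!: derivative_eq_intros simp: power2_eq_square)
  qed
  have "\<phi> 1 \<le> \<phi> 0"
  proof (rule DERIV_nonpos_imp_nonincreasing[of 0 1 \<phi>])
    fix \<theta> :: real assume th: "0 \<le> \<theta>" "\<theta> \<le> 1"
    have "(g (x + \<theta> *\<^sub>R d) - g x) \<bullet> d \<le> blk_norm blk B (g (x + \<theta> *\<^sub>R d) - g x) * norm d"
      by (rule inner_supp[OF supp])
    also have "\<dots> \<le> (l * norm (\<theta> *\<^sub>R d)) * norm d"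
      using Lip[rule_format, OF supported_scale[OF supp, of \<theta>], of x] by (intro mult_right_mono) auto
    also have "\<dots> = \<theta> * l * (norm d)^2" using th by (simp add: power2_eq_square)
    finally show "\<exists>y. DERIV \<phi> \<theta> :> y \<and> y \<le> 0"
      using D by (intro exI[of _ "g (x + \<theta> *\<^sub>R d) \<bullet> d - g x \<bullet> d - \<theta> * l * (norm d)^2"])
        (auto simp: inner_diff_left)
  qed simp
  thus ?thesis by (simp add: \<phi>_def)
qed

locale rcd =
  fixes f :: "real^'n::finite \<Rightarrow> real" and g :: "real^'n \<Rightarrow> real^'n"
    and hc :: "'n \<Rightarrow> real \<Rightarrow> real" and blk :: "'n \<Rightarrow> nat" and N :: nat
    and L :: "nat \<Rightarrow> nat \<Rightarrow> real" and a :: "real^'n"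
  assumes N2: "N \<ge> 2" and blocks: "blk ` UNIV = {..<N}"
    and grad: "\<forall>x. (f has_derivative (\<lambda>v. g x \<bullet> v)) (at x)"
    and Lpos: "\<forall>i<N. \<forall>j<N. L i j = L j i \<and> L i j > 0"
    and Lip: "\<forall>i<N. \<forall>j<N. \<forall>x s. supported_in blk {i, j} s \<longrightarrow>
               blk_norm blk {i, j} (g (x + s) - g x) \<le> L i j * norm s"
    and hconv: "\<forall>c. convex_on UNIV (hc c)"
begin

definition F where "F x = f x + sep_fun hc x"
definition model where "model i j x t = f x + g x \<bullet> t + L i j / 2 * (norm t)^2 + sep_fun hc (x + t)"
definition Sp where "Sp i j = {t. supported_in blk {i, j} t \<and> a \<bullet> t = 0}"
definition Lam where "Lam i = real N * Gamma N L i"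
definition dL where "dL x = d_Lam f g hc blk a Lam x"
definition phiL where "phiL x t = f x + g x \<bullet> t + 1/2 * (wnorm blk Lam t)^2 + sep_fun hc (x + t)"

lemma blk_lt: "blk c < N" using blocks by auto

lemma Gamma_pos: "i < N \<Longrightarrow> Gamma N L i > 0"
proof -
  assume i: "i < N"
  have "(\<Sum>j<N. L i j) > 0" using i N2 Lpos by (intro sum_pos) auto
  thus ?thesis using N2 by (simp add: Gamma_def)
qed

lemma Lam_pos: "i < N \<Longrightarrow> Lam i > 0"
  using Gamma_pos N2 by (simp add: Lam_def)

lemma wnorm_sq: "(wnorm blk Lam t)^2 = (\<Sum>c\<in>UNIV. Lam (blk c) * (t$c)^2)"
proof -
  have "(\<Sum>c\<in>UNIV. Lam (blk c) * (t$c)^2) \<ge> 0"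
    using Lam_pos[OF blk_lt] by (intro sum_nonneg) (simp add: less_imp_le)
  thus ?thesis by (simp add: wnorm_def)
qed

lemma subspace_Sp: "subspace (Sp i j)"
  unfolding subspace_def Sp_def supported_in_def by (auto simp: inner_add_right)

lemma subspace_S: "subspace {t. a \<bullet> t = (0::real)}"
  unfolding subspace_def by (auto simp: inner_add_right)

lemma dir_opt:
  assumes "i < N" "j < N"
  shows "rcd_dir f g hc L blk a x i j \<in> Sp i j \<and>
         (\<forall>t\<in>Sp i j. model i j x (rcd_dir f g hc L blk a x i j) \<le> model i j x t)"
proof -
  have "\<exists>!s. s \<in> Sp i j \<and> (\<forall>t\<in>Sp i j. model i j x s \<le> model i j x t)"
    by (rule argmin_ex1[OF subspace_Sp, of "\<lambda>c. L i j / 2" hc "model i j x" "f x" "g x" x])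
       (use assms Lpos hconv in \<open>auto simp: model_def norm_sq_vec sum_distrib_left\<close>)
  hence "\<exists>!s. supported_in blk {i, j} s \<and> a \<bullet> s = 0 \<and>
          (\<forall>t. supported_in blk {i, j} t \<and> a \<bullet> t = 0 \<longrightarrow> model i j x s \<le> model i j x t)"
    by (simp add: Sp_def)
  from theI'[OF this] show ?thesis
    unfolding rcd_dir_def Let_def Sp_def by (simp add: model_def[abs_def])
qed

lemma dL_opt:
  "dL x \<in> {t. a \<bullet> t = 0} \<and> (\<forall>t\<in>{t. a \<bullet> t = 0}. phiL x (dL x) \<le> phiL x t)"
proof -
  have "\<exists>!s. s \<in> {t. a \<bullet> t = 0} \<and> (\<forall>t\<in>{t. a \<bullet> t = 0}. phiL x s \<le> phiL x t)"
    by (rule argmin_ex1[OF subspace_S, of "\<lambda>c. Lam (blk c) / 2" hc "phiL x" "f x" "g x" x])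
       (use Lam_pos[OF blk_lt] hconv in \<open>auto simp: phiL_def wnorm_sq sum_divide_distrib\<close>)
  hence "\<exists>!s. a \<bullet> s = 0 \<and> (\<forall>t. a \<bullet> t = 0 \<longrightarrow> phiL x s \<le> phiL x t)"
    by simp
  from theI'[OF this] show ?thesis
    unfolding dL_def d_Lam_def Let_def by (simp add: phiL_def[abs_def])
qed

end

context rcd begin

definition Pairs where "Pairs = {{i, j} | i j. i < N \<and> j < N \<and> i \<noteq> j}"
definition dir where "dir x p = rcd_dir f g hc L blk a x (Min p) (Max p)"
definition T where "T x p = x + dir x p"

lemma MinMax2: "Min {i, j} = min i (j::nat) \<and> Max {i, j} = max i j"
  by (auto simp: min_def max_def)

lemma Sp_sym: "Sp i j = Sp j i" by (simp add: Sp_def insert_commute)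
lemma model_sym: "i < N \<Longrightarrow> j < N \<Longrightarrow> model i j = model j i"
  using Lpos by (simp add: model_def[abs_def])

lemma model0: "model i j x 0 = F x" by (simp add: model_def F_def)

lemma step_model:
  assumes ij: "i < N" "j < N"
  shows "\<And>t. t \<in> Sp i j \<Longrightarrow> F (T x {i, j}) \<le> model i j x t"
    and "a \<bullet> T x {i, j} = a \<bullet> x"
proof -
  define m M where "m = min i j" and "M = max i j"
  have mM: "m < N" "M < N" using ij by (auto simp: m_def M_def)
  have Spe: "Sp m M = Sp i j" by (cases "i \<le> j") (auto simp: m_def M_def Sp_sym)
  have me: "model m M = model i j" using ij by (cases "i \<le> j") (auto simp: m_def M_def model_sym)
  have dd: "dir x {i, j} = rcd_dir f g hc L blk a x m M" by (simp add: dir_def MinMax2 m_def M_def)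
  note opt = dir_opt[OF mM, of x]
  have sup: "supported_in blk {m, M} (dir x {i, j})" using opt by (simp add: dd Sp_def)
  have "f (x + dir x {i,j}) \<le> f x + g x \<bullet> dir x {i,j} + L m M / 2 * (norm (dir x {i,j}))^2"
    by (rule descent[OF grad _ sup]) (use Lip mM in auto)
  hence 1: "F (T x {i, j}) \<le> model m M x (dir x {i, j})"
    by (simp add: F_def T_def model_def)
  show "F (T x {i, j}) \<le> model i j x t" if t: "t \<in> Sp i j" for t
  proof -
    have "model m M x (dir x {i, j}) \<le> model m M x t" using opt t by (simp add: dd Spe)
    with 1 show ?thesis using me by simp
  qed
  show "a \<bullet> T x {i, j} = a \<bullet> x" using opt by (simp add: dd T_def Sp_def inner_add_right)
qed

lemma Pairs_finite: "finite Pairs"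
proof -
  have "Pairs \<subseteq> Pow {..<N}" by (auto simp: Pairs_def)
  thus ?thesis by (rule finite_subset) simp
qed

lemma Pairs_nonempty: "Pairs \<noteq> {}"
proof -
  have "{0, 1} \<in> Pairs" unfolding Pairs_def
    by (rule CollectI, intro exI[of _ "0::nat"] exI[of _ "1::nat"]) (use N2 in auto)
  thus ?thesis by blast
qed

lemma Pairs_E: "p \<in> Pairs \<Longrightarrow> (\<And>i j. p = {i, j} \<Longrightarrow> i < N \<Longrightarrow> j < N \<Longrightarrow> i \<noteq> j \<Longrightarrow> P) \<Longrightarrow> P"
  unfolding Pairs_def by blast

lemma F_T_le: "p \<in> Pairs \<Longrightarrow> F (T x p) \<le> F x"
proof (erule Pairs_E)
  fix i j assume "p = {i, j}" "i < N" "j < N"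
  moreover have "(0::real^'n) \<in> Sp i j" by (simp add: Sp_def supported_in_def)
  ultimately show ?thesis using step_model(1)[of i j 0 x] by (simp add: model0)
qed

lemma feas_T: "p \<in> Pairs \<Longrightarrow> a \<bullet> T x p = a \<bullet> x"
  by (erule Pairs_E) (use step_model(2) in auto)

end

lemma theta_props:
  fixes \<alpha> :: "nat \<Rightarrow> real" and cc :: real and N :: nat
  assumes N2: "N \<ge> 2" and sum0: "(\<Sum>i<N. \<alpha> i) = 0" and cc: "0 \<le> cc"
  defines "Spos \<equiv> \<Sum>i<N. if \<alpha> i > 0 then \<alpha> i else 0"
  defines "\<theta> \<equiv> \<lambda>i j. if \<alpha> i = 0 then cc / (real N - 1) else if \<alpha> i * \<alpha> j < 0 then cc * \<bar>\<alpha> j\<bar> / Spos else 0"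
  shows "\<And>i j. i < N \<Longrightarrow> j < N \<Longrightarrow> 0 \<le> \<theta> i j \<and> \<theta> i j \<le> cc"
    and "\<And>i j. i < N \<Longrightarrow> j < N \<Longrightarrow> \<theta> i j * \<alpha> i + \<theta> j i * \<alpha> j = 0"
    and "\<And>i. i < N \<Longrightarrow> (\<Sum>j<N. if j = i then 0 else \<theta> i j) = cc"
proof -
  define Sneg where "Sneg = (\<Sum>i<N. if \<alpha> i < 0 then - \<alpha> i else 0)"
  have "Spos - Sneg = (\<Sum>i<N. \<alpha> i)"
    unfolding Spos_def Sneg_def sum_subtractf[symmetric] by (intro sum.cong) auto
  hence SS: "Sneg = Spos" using sum0 by simp
  have pos_le: "\<alpha> j \<le> Spos" if "j < N" "\<alpha> j > 0" for j
  proof -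
    have "(if \<alpha> j > 0 then \<alpha> j else 0) \<le> Spos"
      unfolding Spos_def by (rule member_le_sum) (use that in auto)
    thus ?thesis using that by simp
  qed
  have neg_le: "- \<alpha> j \<le> Spos" if "j < N" "\<alpha> j < 0" for j
  proof -
    have "(if \<alpha> j < 0 then - \<alpha> j else 0) \<le> Sneg"
      unfolding Sneg_def by (rule member_le_sum) (use that in auto)
    thus ?thesis using that SS by simp
  qed
  have N1: "real N - 1 \<ge> 1" using N2 by simp
  show "0 \<le> \<theta> i j \<and> \<theta> i j \<le> cc" if ij: "i < N" "j < N" for i j
  proof (cases "\<alpha> i = 0")
    case True
    have "cc / (real N - 1) \<le> cc / 1" using N1 cc by (intro divide_left_mono) auto
    thus ?thesis using True N1 cc by (simp add: \<theta>_def)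
  next
    case False
    show ?thesis
    proof (cases "\<alpha> i * \<alpha> j < 0")
      case True
      have "\<bar>\<alpha> j\<bar> \<le> Spos \<and> Spos > 0"
      proof (cases "\<alpha> j > 0")
        case True
        thus ?thesis using pos_le[OF ij(2)] by auto
      next
        case False
        hence aj: "\<alpha> j < 0" using \<open>\<alpha> i * \<alpha> j < 0\<close> by (cases "\<alpha> j = 0") auto
        hence "\<alpha> i > 0" using \<open>\<alpha> i * \<alpha> j < 0\<close> by (simp add: mult_less_0_iff)
        thus ?thesis using neg_le[OF ij(2) aj] pos_le[OF ij(1)] aj by auto
      qed
      hence "cc * \<bar>\<alpha> j\<bar> / Spos \<le> cc" "0 \<le> cc * \<bar>\<alpha> j\<bar> / Spos"
        using cc by (auto simp: divide_le_eq mult_left_mono)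
      thus ?thesis using False True by (simp add: \<theta>_def)
    next
      case False2: False
      thus ?thesis using False cc by (simp add: \<theta>_def)
    qed
  qed
  show "\<theta> i j * \<alpha> i + \<theta> j i * \<alpha> j = 0" if ij: "i < N" "j < N" for i j
  proof (cases "\<alpha> i = 0 \<or> \<alpha> j = 0")
    case True thus ?thesis by (auto simp: \<theta>_def)
  next
    case False
    show ?thesis
    proof (cases "\<alpha> i * \<alpha> j < 0")
      case True
      hence "\<alpha> j * \<alpha> i < 0" by (simp add: mult.commute)
      moreover have "\<bar>\<alpha> j\<bar> * \<alpha> i + \<bar>\<alpha> i\<bar> * \<alpha> j = 0"
        using True by (cases "\<alpha> i > 0") (auto simp: mult_less_0_iff)
      moreover have "cc * \<bar>\<alpha> j\<bar> / Spos * \<alpha> i + cc * \<bar>\<alpha> i\<bar> / Spos * \<alpha> j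
          = cc / Spos * (\<bar>\<alpha> j\<bar> * \<alpha> i + \<bar>\<alpha> i\<bar> * \<alpha> j)"
        by (simp add: divide_inverse algebra_simps)
      ultimately show ?thesis using True False by (simp add: \<theta>_def)
    next
      case False2: False
      hence "\<not> \<alpha> j * \<alpha> i < 0" by (simp add: mult.commute)
      thus ?thesis using False False2 by (simp add: \<theta>_def)
    qed
  qed
  show "(\<Sum>j<N. if j = i then 0 else \<theta> i j) = cc" if i: "i < N" for i
  proof (cases "\<alpha> i = 0")
    case True
    have "(\<Sum>j<N. if j = i then 0 else \<theta> i j) = (\<Sum>j<N. cc / (real N - 1)) - (\<Sum>j<N. if j = i then cc / (real N - 1) else 0)"
      unfolding sum_subtractf[symmetric] by (intro sum.cong) (auto simp: \<theta>_def True)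
    also have "\<dots> = real N * (cc / (real N - 1)) - cc / (real N - 1)" using i by simp
    also have "\<dots> = (real N - 1) * (cc / (real N - 1))" by (simp add: left_diff_distrib diff_divide_distrib)
    also have "\<dots> = cc" using N1 by simp
    finally show ?thesis .
  next
    case False
    show ?thesis
    proof (cases "\<alpha> i > 0")
      case True
      have "(\<Sum>j<N. if j = i then 0 else \<theta> i j) = (\<Sum>j<N. (cc / Spos) * (if \<alpha> j < 0 then - \<alpha> j else 0))"
        using True by (intro sum.cong) (auto simp: \<theta>_def mult_less_0_iff)
      also have "\<dots> = (cc / Spos) * Sneg" by (simp add: Sneg_def sum_distrib_left)
      also have "\<dots> = cc" using SS pos_le[OF i True] True by simp
      finally show ?thesis .
    next
      case False2: False
      hence ai: "\<alpha> i < 0" using False by simp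
      have "(\<Sum>j<N. if j = i then 0 else \<theta> i j) = (\<Sum>j<N. (cc / Spos) * (if \<alpha> j > 0 then \<alpha> j else 0))"
        using ai by (intro sum.cong) (auto simp: \<theta>_def mult_less_0_iff)
      also have "\<dots> = (cc / Spos) * Spos" by (simp add: Spos_def sum_distrib_left)
      also have "\<dots> = cc" using neg_le[OF i ai] ai by simp
      finally show ?thesis .
    qed
  qed
qed

context rcd begin

lemma sum_blocks: "(\<Sum>i<N. \<Sum>c\<in>{c. blk c = i}. q c) = (\<Sum>c\<in>UNIV. q c)"
proof -
  have "(\<Sum>c\<in>UNIV. q c) = (\<Sum>i\<in>blk ` UNIV. \<Sum>c\<in>{c\<in>UNIV. blk c = i}. q c)"
    by (rule sum.image_gen) simp
  thus ?thesis using blocks by simp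
qed

lemma sum_ite2:
  assumes "i \<noteq> j"
  shows "(\<Sum>c\<in>UNIV. if blk c = i then A c else if blk c = j then B c else 0)
       = (\<Sum>c\<in>{c. blk c = i}. A c) + (\<Sum>c\<in>{c. blk c = j}. B c)"
proof -
  have "(\<Sum>c\<in>UNIV. if blk c = i then A c else if blk c = j then B c else 0)
      = (\<Sum>c\<in>UNIV. (if blk c = i then A c else 0) + (if blk c = j then B c else 0))"
    using assms by (intro sum.cong) auto
  also have "\<dots> = (\<Sum>c\<in>UNIV. if blk c = i then A c else 0) + (\<Sum>c\<in>UNIV. if blk c = j then B c else 0)"
    by (rule sum.distrib)
  also have "\<dots> = (\<Sum>c\<in>{c. blk c = i}. A c) + (\<Sum>c\<in>{c. blk c = j}. B c)"
    by (simp add: sum.inter_filter[symmetric])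
  finally show ?thesis .
qed

lemma pairs_sum:
  fixes G :: "nat set \<Rightarrow> real"
  shows "(\<Sum>i<N. \<Sum>j<N. if j = i then 0 else G {i, j}) = 2 * (\<Sum>p\<in>Pairs. G p)"
proof -
  define U1 where "U1 = {(i, j). i < j \<and> j < N}"
  define U2 where "U2 = {(i, j). j < i \<and> i < (N::nat)}"
  have fin: "finite U1" "finite U2"
    by (rule finite_subset[of _ "{..<N} \<times> {..<N}"], auto simp: U1_def U2_def)+
  have "(\<Sum>i<N. \<Sum>j<N. if j = i then 0 else G {i, j})
      = (\<Sum>(i,j)\<in>{..<N} \<times> {..<N}. if j = i then 0 else G {i, j})"
    by (simp add: sum.cartesian_product)
  also have "\<dots> = (\<Sum>(i,j)\<in>U1 \<union> U2. G {i, j})"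
    by (rule sum.mono_neutral_cong_right) (auto simp: U1_def U2_def split: if_splits)
  also have "\<dots> = (\<Sum>(i,j)\<in>U1. G {i, j}) + (\<Sum>(i,j)\<in>U2. G {i, j})"
    by (rule sum.union_disjoint) (use fin in \<open>auto simp: U1_def U2_def\<close>)
  also have "(\<Sum>(i,j)\<in>U2. G {i, j}) = (\<Sum>(i,j)\<in>U1. G {i, j})"
    by (rule sum.reindex_bij_witness[of _ "\<lambda>(i,j). (j,i)" "\<lambda>(i,j). (j,i)"])
       (auto simp: U1_def U2_def insert_commute)
  also have "(\<Sum>(i,j)\<in>U1. G {i, j}) = (\<Sum>p\<in>Pairs. G p)"
  proof (rule sum.reindex_bij_witness[of _ "\<lambda>p. (Min p, Max p)" "\<lambda>(i,j). {i,j}"])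
    fix p assume p: "p \<in> Pairs"
    then obtain i j where ij: "p = {i, j}" "i < N" "j < N" "i \<noteq> j" by (rule Pairs_E)
    show "(case (Min p, Max p) of (i, j) \<Rightarrow> {i, j}) = p" using ij by (auto simp: MinMax2)
    show "(Min p, Max p) \<in> U1" using ij by (auto simp: MinMax2 U1_def)
  next
    fix b assume b: "b \<in> U1"
    then obtain i j where ij: "b = (i, j)" "i < j" "j < N" by (auto simp: U1_def)
    show "(Min (case b of (i, j) \<Rightarrow> {i, j}), Max (case b of (i, j) \<Rightarrow> {i, j})) = b"
      using ij by (auto simp: MinMax2)
    have "i < N" "i \<noteq> j" using ij by auto
    hence "{i, j} \<in> Pairs" unfolding Pairs_def using ij(3) by blast
    thus "(case b of (i, j) \<Rightarrow> {i, j}) \<in> Pairs" using ij by simp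
    show "G (case b of (i, j) \<Rightarrow> {i, j}) = (case b of (i, j) \<Rightarrow> G {i, j})" using ij by simp
  qed
  finally show ?thesis by simp
qed

end

context rcd begin

lemma model_minus_F:
  "model i j x s - F x = (\<Sum>c\<in>UNIV. g x$c * s$c + L i j/2 * (s$c)^2 + (hc c (x$c + s$c) - hc c (x$c)))"
  unfolding model_def F_def sep_fun_def inner_vec_def norm_sq_vec
  by (simp add: sum.distrib sum_subtractf sum_distrib_left)

lemma key_x:
  assumes lm: "\<forall>i<N. lm \<le> Lam i" and Lmx: "\<forall>i<N. \<forall>j<N. L i j \<le> Lmx"
    and cc: "0 < cc" "cc \<le> 1" "Lmx * cc \<le> lm / 2"
  shows "cc * lm / 2 * (norm (dL x))^2 \<le> 2 * (\<Sum>p\<in>Pairs. F x - F (T x p))"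
proof -
  define d where "d = dL x"
  have ad: "a \<bullet> d = 0" and opt: "phiL x d \<le> phiL x 0"
    using dL_opt[of x] by (auto simp: d_def)
  define E where "E = g x \<bullet> d + sep_fun hc (x + d) - sep_fun hc x"
  have E_le: "E \<le> - (lm/2) * (norm d)^2"
  proof -
    have w0: "(wnorm blk Lam 0)^2 = 0" by (simp add: wnorm_sq)
    have "(\<Sum>c\<in>UNIV. lm * (d$c)^2) \<le> (\<Sum>c\<in>UNIV. Lam (blk c) * (d$c)^2)"
      using lm blk_lt by (intro sum_mono mult_right_mono) auto
    hence "lm * (norm d)^2 \<le> (wnorm blk Lam d)^2"
      by (simp add: wnorm_sq norm_sq_vec sum_distrib_left)
    thus ?thesis using opt w0 by (simp add: phiL_def E_def)
  qed
  define \<alpha> where "\<alpha> i = (\<Sum>c\<in>{c. blk c = i}. a$c * d$c)" for i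
  have s\<alpha>: "(\<Sum>i<N. \<alpha> i) = 0"
    using ad unfolding \<alpha>_def sum_blocks by (simp add: inner_vec_def)
  define \<theta> where "\<theta> = (\<lambda>i j. if \<alpha> i = 0 then cc / (real N - 1) else if \<alpha> i * \<alpha> j < 0
      then cc * \<bar>\<alpha> j\<bar> / (\<Sum>i<N. if \<alpha> i > 0 then \<alpha> i else 0) else 0)"
  have th1: "\<And>i j. i < N \<Longrightarrow> j < N \<Longrightarrow> 0 \<le> \<theta> i j \<and> \<theta> i j \<le> cc"
    using theta_props(1)[OF N2 s\<alpha>, of cc] cc unfolding \<theta>_def by simp
  have th2: "\<And>i j. i < N \<Longrightarrow> j < N \<Longrightarrow> \<theta> i j * \<alpha> i + \<theta> j i * \<alpha> j = 0"
    using theta_props(2)[OF N2 s\<alpha>, of cc] cc unfolding \<theta>_def by simp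
  have th3: "\<And>i. i < N \<Longrightarrow> (\<Sum>j<N. if j = i then 0 else \<theta> i j) = cc"
    using theta_props(3)[OF N2 s\<alpha>, of cc] cc unfolding \<theta>_def by simp
  define t where "t i j = (\<chi> c. if blk c = i then \<theta> i j * d$c else if blk c = j then \<theta> j i * d$c else 0)" for i j
  have tS: "t i j \<in> Sp i j" if ij: "i < N" "j < N" "i \<noteq> j" for i j
  proof -
    have "a \<bullet> t i j = (\<Sum>c\<in>UNIV. if blk c = i then \<theta> i j * (a$c * d$c) else if blk c = j then \<theta> j i * (a$c * d$c) else 0)"
      unfolding inner_vec_def t_def by (intro sum.cong) auto
    also have "\<dots> = \<theta> i j * \<alpha> i + \<theta> j i * \<alpha> j"
      using ij by (simp add: sum_ite2 \<alpha>_def sum_distrib_left)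
    finally show ?thesis using th2[OF ij(1,2)] by (simp add: Sp_def supported_in_def t_def)
  qed
  define Bk where "Bk k th l = (\<Sum>c\<in>{c. blk c = k}. g x$c * (th * d$c) + l/2 * (th * d$c)^2
       + (hc c (x$c + th * d$c) - hc c (x$c)))" for k th l
  define Ek where "Ek k = (\<Sum>c\<in>{c. blk c = k}. g x$c * d$c + (hc c (x$c + d$c) - hc c (x$c)))" for k
  define Dk where "Dk k = (\<Sum>c\<in>{c. blk c = k}. (d$c)^2)" for k
  have mB: "model i j x (t i j) - F x = Bk i (\<theta> i j) (L i j) + Bk j (\<theta> j i) (L i j)"
    if ij: "i \<noteq> j" for i j
  proof -
    have "model i j x (t i j) - F x = (\<Sum>c\<in>UNIV. if blk c = i then
            g x$c * (\<theta> i j * d$c) + L i j/2 * (\<theta> i j * d$c)^2 + (hc c (x$c + \<theta> i j * d$c) - hc c (x$c))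
          else if blk c = j then
            g x$c * (\<theta> j i * d$c) + L i j/2 * (\<theta> j i * d$c)^2 + (hc c (x$c + \<theta> j i * d$c) - hc c (x$c))
          else 0)"
      unfolding model_minus_F t_def by (intro sum.cong) auto
    also have "\<dots> = Bk i (\<theta> i j) (L i j) + Bk j (\<theta> j i) (L i j)"
      using ij unfolding Bk_def by (rule sum_ite2)
    finally show ?thesis .
  qed
  have Bk_le: "Bk k th l \<le> th * Ek k + Lmx/2 * th^2 * Dk k"
    if th: "0 \<le> th" "th \<le> 1" and l: "0 \<le> l" "l \<le> Lmx" for k th l
  proof -
    have "g x$c * (th * d$c) + l/2 * (th * d$c)^2 + (hc c (x$c + th * d$c) - hc c (x$c))
        \<le> th * (g x$c * d$c + (hc c (x$c + d$c) - hc c (x$c))) + Lmx/2 * th^2 * (d$c)^2" for c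
    proof -
      have "hc c ((1 - th) *\<^sub>R (x$c) + th *\<^sub>R (x$c + d$c)) \<le> (1 - th) * hc c (x$c) + th * hc c (x$c + d$c)"
        by (rule convex_onD[OF hconv[rule_format]]) (use th in auto)
      hence h: "hc c (x$c + th * d$c) \<le> (1 - th) * hc c (x$c) + th * hc c (x$c + d$c)"
        by (simp add: algebra_simps)
      have "l/2 * (th * d$c)^2 \<le> Lmx/2 * (th * d$c)^2"
        using l by (intro mult_right_mono) auto
      thus ?thesis using h by (simp add: algebra_simps power_mult_distrib)
    qed
    hence "Bk k th l \<le> (\<Sum>c\<in>{c. blk c = k}. th * (g x$c * d$c + (hc c (x$c + d$c) - hc c (x$c))) + Lmx/2 * th^2 * (d$c)^2)"
      unfolding Bk_def by (intro sum_mono) auto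
    also have "\<dots> = (\<Sum>c\<in>{c. blk c = k}. th * (g x$c * d$c + (hc c (x$c + d$c) - hc c (x$c))))
        + (\<Sum>c\<in>{c. blk c = k}. Lmx/2 * th^2 * (d$c)^2)"
      by (rule sum.distrib)
    also have "\<dots> = th * Ek k + Lmx/2 * th^2 * Dk k"
      unfolding Ek_def Dk_def by (simp only: sum_distrib_left)
    finally show ?thesis .
  qed
  have Lpos': "\<And>i j. i < N \<Longrightarrow> j < N \<Longrightarrow> 0 \<le> L i j" using Lpos by (auto simp: less_imp_le)
  have Dk0: "Dk k \<ge> 0" for k unfolding Dk_def by (intro sum_nonneg) auto
  have Lmx0: "Lmx \<ge> 0" using Lmx Lpos' N2 by (meson order.trans less_le_trans zero_less_numeral)
  have row: "(\<Sum>j<N. if j = i then 0 else Bk i (\<theta> i j) (L i j)) \<le> cc * (Ek i + Lmx/2 * cc * Dk i)"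
    if i: "i < N" for i
  proof -
    have "(\<Sum>j<N. if j = i then 0 else Bk i (\<theta> i j) (L i j))
        \<le> (\<Sum>j<N. (if j = i then 0 else \<theta> i j) * (Ek i + Lmx/2 * cc * Dk i))"
    proof (rule sum_mono)
      fix j assume j: "j \<in> {..<N}"
      have t: "0 \<le> \<theta> i j" "\<theta> i j \<le> cc" using th1[OF i] j by auto
      have "Bk i (\<theta> i j) (L i j) \<le> \<theta> i j * Ek i + Lmx/2 * (\<theta> i j)^2 * Dk i"
        using t cc i j Lmx Lpos' by (intro Bk_le) auto
      also have "Lmx/2 * (\<theta> i j)^2 * Dk i \<le> Lmx/2 * (cc * \<theta> i j) * Dk i"
        using t Lmx0 Dk0 by (intro mult_right_mono mult_left_mono) (auto simp: power2_eq_square intro: mult_right_mono)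
      finally show "(if j = i then 0 else Bk i (\<theta> i j) (L i j)) \<le> (if j = i then 0 else \<theta> i j) * (Ek i + Lmx/2 * cc * Dk i)"
        by (simp add: algebra_simps)
    qed
    also have "\<dots> = cc * (Ek i + Lmx/2 * cc * Dk i)"
      using th3[OF i] by (simp add: sum_distrib_right[symmetric])
    finally show ?thesis .
  qed
  define W where "W i j = (if j = i then 0 else model i j x (t i j) - F x)" for i j
  have "(\<Sum>i<N. \<Sum>j<N. W i j) = (\<Sum>i<N. \<Sum>j<N. if j = i then 0 else Bk i (\<theta> i j) (L i j))
       + (\<Sum>i<N. \<Sum>j<N. if j = i then 0 else Bk j (\<theta> j i) (L i j))"
    unfolding sum.distrib[symmetric] W_def by (intro sum.cong refl) (auto simp: mB)
  also have "(\<Sum>i<N. \<Sum>j<N. if j = i then 0 else Bk j (\<theta> j i) (L i j))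
      = (\<Sum>i<N. \<Sum>j<N. if j = i then 0 else Bk i (\<theta> i j) (L i j))"
    by (subst sum.swap) (intro sum.cong refl, use Lpos in auto)
  moreover have "(\<Sum>i<N. \<Sum>j<N. if j = i then 0 else Bk i (\<theta> i j) (L i j))
      \<le> (\<Sum>i<N. cc * (Ek i + Lmx/2 * cc * Dk i))"
    by (rule sum_mono) (use row in auto)
  ultimately have "(\<Sum>i<N. \<Sum>j<N. W i j) \<le> 2 * (\<Sum>i<N. cc * (Ek i + Lmx/2 * cc * Dk i))"
    by linarith
  also have "(\<Sum>i<N. cc * (Ek i + Lmx/2 * cc * Dk i)) = cc * (E + Lmx/2 * cc * (norm d)^2)"
  proof -
    have e1: "(\<Sum>i<N. Ek i) = E"
      unfolding Ek_def sum_blocks E_def sep_fun_def inner_vec_def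
      by (simp add: sum.distrib sum_subtractf)
    have e2: "(\<Sum>i<N. Dk i) = (norm d)^2" unfolding Dk_def sum_blocks norm_sq_vec ..
    have e3: "(\<Sum>i<N. cc * (Ek i + Lmx/2 * cc * Dk i)) = (\<Sum>i<N. cc * Ek i + (cc * (Lmx/2 * cc)) * Dk i)"
      by (intro sum.cong) (simp_all add: algebra_simps)
    have e4: "(\<Sum>i<N. cc * Ek i + (cc * (Lmx/2 * cc)) * Dk i) = cc * (\<Sum>i<N. Ek i) + (cc * (Lmx/2 * cc)) * (\<Sum>i<N. Dk i)"
      by (simp add: sum.distrib sum_distrib_left)
    show ?thesis unfolding e3 e4 e1 e2 by (simp add: algebra_simps)
  qed
  also have "2 * (cc * (E + Lmx/2 * cc * (norm d)^2)) \<le> - (cc * lm / 2 * (norm d)^2)"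
  proof -
    have "Lmx/2 * cc * (norm d)^2 \<le> lm / 4 * (norm d)^2"
      using cc(3) by (intro mult_right_mono) auto
    hence "E + Lmx/2 * cc * (norm d)^2 \<le> - (lm/4) * (norm d)^2" using E_le by simp
    hence "cc * (E + Lmx/2 * cc * (norm d)^2) \<le> cc * (- (lm/4) * (norm d)^2)"
      using cc by (intro mult_left_mono) auto
    thus ?thesis by simp
  qed
  finally have Wb: "(\<Sum>i<N. \<Sum>j<N. W i j) \<le> - (cc * lm / 2 * (norm d)^2)" .
  have "(\<Sum>i<N. \<Sum>j<N. - W i j) \<le> (\<Sum>i<N. \<Sum>j<N. if j = i then 0 else F x - F (T x {i, j}))"
  proof (intro sum_mono)
    fix i j assume ij: "i \<in> {..<N}" "j \<in> {..<N}"
    show "- W i j \<le> (if j = i then 0 else F x - F (T x {i, j}))"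
      using step_model(1)[of i j "t i j" x] tS[of i j] ij by (auto simp: W_def)
  qed
  also have "\<dots> = 2 * (\<Sum>p\<in>Pairs. F x - F (T x p))" by (rule pairs_sum)
  finally show ?thesis using Wb by (simp add: sum_negf d_def)
qed

lemma M2_le:
  assumes "\<forall>i<N. Gamma N L i \<le> Gm"
  shows "(M2 f g hc blk a N L x)^2 \<le> Gm * (norm (dL x))^2"
proof -
  have dd: "d_Lam f g hc blk a (\<lambda>i. real N * Gamma N L i) x = dL x"
    by (simp add: dL_def Lam_def[abs_def])
  have gp: "Gamma N L (blk c) > 0" for c by (rule Gamma_pos[OF blk_lt])
  have "(M2 f g hc blk a N L x)^2 = (\<Sum>c\<in>UNIV. (Gamma N L (blk c) * dL x $ c)^2 / Gamma N L (blk c))"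
    unfolding M2_def wnorm_dual_def Dmat_def dd
    by (subst real_sqrt_pow2) (auto intro!: sum_nonneg simp: gp less_imp_le)
  also have "\<dots> = (\<Sum>c\<in>UNIV. Gamma N L (blk c) * (dL x $ c)^2)"
    using gp by (intro sum.cong refl) (simp add: power2_eq_square field_simps)
  also have "\<dots> \<le> (\<Sum>c\<in>UNIV. Gm * (dL x $ c)^2)"
    using assms blk_lt by (intro sum_mono mult_right_mono) auto
  also have "\<dots> = Gm * (norm (dL x))^2" by (simp add: norm_sq_vec sum_distrib_left)
  finally show ?thesis .
qed

end

context rcd begin

definition clamp where "clamp p = (if p \<in> Pairs then p else (SOME q. q \<in> Pairs))"

lemma clamp_in: "clamp p \<in> Pairs"
  using Pairs_nonempty by (auto simp: clamp_def intro: someI_ex)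

lemma clamp_id: "p \<in> Pairs \<Longrightarrow> clamp p = p" by (simp add: clamp_def)

primrec Z where
  "Z x \<omega> 0 = x"
| "Z x \<omega> (Suc k) = T (Z x \<omega> k) (clamp (\<omega> !! k))"

lemma Z_shift: "Z x (p ## \<omega>) (Suc k) = Z (T x (clamp p)) \<omega> k"
  by (induction k) auto

lemma Z_feas: "a \<bullet> Z x \<omega> k = a \<bullet> x"
  by (induction k) (auto simp: feas_T clamp_in)

lemma Z_dec: "F (Z x \<omega> (Suc k)) \<le> F (Z x \<omega> k)"
  by (simp add: F_T_le clamp_in)

definition QQ where "QQ = measure_pmf (pmf_of_set Pairs)"
definition MM where "MM = stream_space QQ"

lemma Z_meas: "(\<lambda>\<omega>. \<phi> (Z x \<omega> k) :: real) \<in> borel_measurable MM"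
proof (induction k arbitrary: x \<phi>)
  case 0 thus ?case by simp
next
  case (Suc k)
  have eq: "(\<lambda>\<omega>. \<phi> (Z x \<omega> (Suc k))) = (\<lambda>\<omega>. \<Sum>p\<in>Pairs. if clamp (shd \<omega>) = p then \<phi> (Z (T x p) (stl \<omega>) k) else 0)"
  proof
    fix \<omega> :: "nat set stream"
    have "\<phi> (Z x \<omega> (Suc k)) = \<phi> (Z (T x (clamp (shd \<omega>))) (stl \<omega>) k)"
      using Z_shift[of x "shd \<omega>" "stl \<omega>" k] by simp
    also have "\<dots> = (\<Sum>p\<in>Pairs. if clamp (shd \<omega>) = p then \<phi> (Z (T x p) (stl \<omega>) k) else 0)"
      using clamp_in Pairs_finite by (simp add: sum.delta)
    finally show "\<phi> (Z x \<omega> (Suc k)) = (\<Sum>p\<in>Pairs. if clamp (shd \<omega>) = p then \<phi> (Z (T x p) (stl \<omega>) k) else 0)" .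
  qed
  show ?case unfolding eq
  proof (intro borel_measurable_sum measurable_If)
    fix p
    show "(\<lambda>\<omega>. \<phi> (Z (T x p) (stl \<omega>) k)) \<in> borel_measurable MM"
      using measurable_compose[OF measurable_stl Suc.IH[of \<phi> "T x p", unfolded MM_def]]
      unfolding MM_def by simp
    show "(\<lambda>\<omega>. 0) \<in> borel_measurable MM" by simp
    have "shd -` {q. clamp q = p} \<inter> space MM \<in> sets MM"
      unfolding MM_def by (rule measurable_sets[OF measurable_shd]) (simp add: QQ_def)
    moreover have "{\<omega> \<in> space MM. clamp (shd \<omega>) = p} = shd -` {q. clamp q = p} \<inter> space MM" by auto
    ultimately show "{\<omega> \<in> space MM. clamp (shd \<omega>) = p} \<in> sets MM" by simp
  qed
qed

end

context rcd begin

definition m2 where "m2 x = (M2 f g hc blk a N L x)^2"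

lemma m2_nonneg: "m2 x \<ge> 0" by (simp add: m2_def)

definition Ssum where "Ssum n x \<omega> = (\<Sum>k<n. m2 (Z x \<omega> k))"

lemma Ssum_meas: "(\<lambda>\<omega>. ennreal (Ssum n x \<omega>)) \<in> borel_measurable MM"
proof -
  have "(\<lambda>\<omega>. Ssum n x \<omega>) \<in> borel_measurable MM"
    unfolding Ssum_def by (intro borel_measurable_sum Z_meas)
  thus ?thesis by (rule measurable_compose[OF _ measurable_ennreal])
qed

lemma Ssum_shift: "Ssum (Suc n) x (p ## \<omega>) = m2 x + Ssum n (T x (clamp p)) \<omega>"
  unfolding Ssum_def sum.lessThan_Suc_shift by (simp add: Z_shift del: Z.simps(2))

lemma prob_MM: "prob_space MM"
  unfolding MM_def QQ_def by (rule prob_space.prob_space_stream_space[OF prob_space_measure_pmf])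

lemma bound:
  assumes C0: "C0 \<ge> 0" "\<forall>y. m2 y \<le> C0 * (\<Sum>p\<in>Pairs. F y - F (T y p))"
    and Fl: "\<forall>y. a \<bullet> y = b \<longrightarrow> Fl \<le> F y"
  shows "a \<bullet> x = b \<Longrightarrow> (\<integral>\<^sup>+\<omega>. ennreal (Ssum n x \<omega>) \<partial>MM) \<le> ennreal (real (card Pairs) * C0 * (F x - Fl))"
proof (induction n arbitrary: x)
  case 0
  thus ?case by (simp add: Ssum_def)
next
  case (Suc n)
  define K where "K = real (card Pairs)"
  have K0: "K > 0" using Pairs_finite Pairs_nonempty by (simp add: K_def card_gt_0_iff)
  have feasT: "a \<bullet> T x (clamp p) = b" for p using Suc.prems feas_T[OF clamp_in] by simp
  interpret P: prob_space MM by (rule prob_MM)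
  have "(\<integral>\<^sup>+\<omega>. ennreal (Ssum (Suc n) x \<omega>) \<partial>MM)
      = (\<integral>\<^sup>+p. (\<integral>\<^sup>+\<omega>. ennreal (Ssum (Suc n) x (p ## \<omega>)) \<partial>MM) \<partial>QQ)"
    unfolding MM_def QQ_def
    by (rule prob_space.nn_integral_stream_space[OF prob_space_measure_pmf]) (use Ssum_meas in \<open>simp add: MM_def QQ_def\<close>)
  also have "\<dots> \<le> (\<integral>\<^sup>+p. ennreal (m2 x + K * C0 * (F (T x (clamp p)) - Fl)) \<partial>QQ)"
  proof (rule nn_integral_mono)
    fix p
    have nn: "0 \<le> Ssum n (T x (clamp p)) \<omega>" for \<omega>
      unfolding Ssum_def by (intro sum_nonneg m2_nonneg)
    have "(\<integral>\<^sup>+\<omega>. ennreal (Ssum (Suc n) x (p ## \<omega>)) \<partial>MM)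
        = (\<integral>\<^sup>+\<omega>. ennreal (m2 x) + ennreal (Ssum n (T x (clamp p)) \<omega>) \<partial>MM)"
      by (intro nn_integral_cong) (simp add: Ssum_shift ennreal_plus m2_nonneg nn)
    also have "\<dots> = (\<integral>\<^sup>+\<omega>. ennreal (m2 x) \<partial>MM) + (\<integral>\<^sup>+\<omega>. ennreal (Ssum n (T x (clamp p)) \<omega>) \<partial>MM)"
      by (rule nn_integral_add) (simp_all add: Ssum_meas)
    also have "(\<integral>\<^sup>+\<omega>. ennreal (m2 x) \<partial>MM) = ennreal (m2 x)"
      by (simp add: P.emeasure_space_1)
    also have "(\<integral>\<^sup>+\<omega>. ennreal (Ssum n (T x (clamp p)) \<omega>) \<partial>MM) \<le> ennreal (K * C0 * (F (T x (clamp p)) - Fl))"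
      using Suc.IH[OF feasT] by (simp add: K_def)
    also have "ennreal (m2 x) + ennreal (K * C0 * (F (T x (clamp p)) - Fl))
        = ennreal (m2 x + K * C0 * (F (T x (clamp p)) - Fl))"
      using Fl feasT[of p] K0 C0 m2_nonneg[of x] by (intro ennreal_plus[symmetric]) auto
    finally show "(\<integral>\<^sup>+\<omega>. ennreal (Ssum (Suc n) x (p ## \<omega>)) \<partial>MM) \<le> ennreal (m2 x + K * C0 * (F (T x (clamp p)) - Fl))"
      by (simp add: add_left_mono)
  qed
  also have "\<dots> = (\<Sum>p\<in>Pairs. ennreal (m2 x + K * C0 * (F (T x p) - Fl))) / card Pairs"
    unfolding QQ_def nn_integral_pmf_of_set[OF Pairs_nonempty Pairs_finite]
    by (intro arg_cong2[where f = "(/)"] sum.cong refl) (auto simp: clamp_id)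
  also have "\<dots> = ennreal ((\<Sum>p\<in>Pairs. m2 x + K * C0 * (F (T x p) - Fl)) / K)"
  proof -
    have nn: "0 \<le> m2 x + K * C0 * (F (T x p) - Fl)" if "p \<in> Pairs" for p
      using Fl feas_T[OF that, of x] Suc.prems K0 C0 m2_nonneg[of x] by auto
    hence "(\<Sum>p\<in>Pairs. ennreal (m2 x + K * C0 * (F (T x p) - Fl))) = ennreal (\<Sum>p\<in>Pairs. m2 x + K * C0 * (F (T x p) - Fl))"
      by (rule sum_ennreal)
    moreover have "ennreal (real (card Pairs)) = of_nat (card Pairs)" by (simp add: ennreal_of_nat_eq_real_of_nat)
    ultimately show ?thesis using nn K0 unfolding K_def
      by (simp add: divide_ennreal[symmetric] sum_nonneg)
  qed
  also have "\<dots> \<le> ennreal (K * C0 * (F x - Fl))"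
  proof (rule ennreal_leI)
    have "(\<Sum>p\<in>Pairs. m2 x + K * C0 * (F (T x p) - Fl)) = (\<Sum>p\<in>Pairs. m2 x) + (\<Sum>p\<in>Pairs. K * C0 * (F (T x p) - Fl))"
      by (rule sum.distrib)
    also have "\<dots> = K * m2 x + K * (C0 * (\<Sum>p\<in>Pairs. F (T x p) - Fl))"
      by (simp add: K_def sum_distrib_left mult.assoc)
    also have "\<dots> \<le> K * (C0 * (\<Sum>p\<in>Pairs. F x - F (T x p))) + K * (C0 * (\<Sum>p\<in>Pairs. F (T x p) - Fl))"
      using C0(2) K0 by (intro add_right_mono mult_left_mono) auto
    also have "\<dots> = K * (C0 * ((\<Sum>p\<in>Pairs. F x - F (T x p)) + (\<Sum>p\<in>Pairs. F (T x p) - Fl)))"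
      by (simp add: algebra_simps)
    also have "(\<Sum>p\<in>Pairs. F x - F (T x p)) + (\<Sum>p\<in>Pairs. F (T x p) - Fl) = K * (F x - Fl)"
      by (simp add: sum.distrib[symmetric] K_def)
    also have "K * (C0 * (K * (F x - Fl))) = K * (K * C0 * (F x - Fl))" by (simp add: algebra_simps)
    finally show "(\<Sum>p\<in>Pairs. m2 x + K * C0 * (F (T x p) - Fl)) / K \<le> K * C0 * (F x - Fl)"
      using K0 by (simp add: divide_le_eq mult.commute)
  qed
  finally show ?case by (simp add: K_def)
qed

end

context rcd begin

lemma key_C: "\<exists>C0\<ge>0. \<forall>y. m2 y \<le> C0 * (\<Sum>p\<in>Pairs. F y - F (T y p))"
proof -
  define lm where "lm = Min (Lam ` {..<N})"
  define Lmx where "Lmx = Max ((\<lambda>(i,j). L i j) ` ({..<N} \<times> {..<N}))"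
  define Gm where "Gm = Max (Gamma N L ` {..<N})"
  have N0: "0 < N" using N2 by simp
  have lm0: "lm > 0" unfolding lm_def using N0 Lam_pos by (subst Min_gr_iff) auto
  have lm: "\<forall>i<N. lm \<le> Lam i" unfolding lm_def by (auto intro: Min_le)
  have Lmx: "\<forall>i<N. \<forall>j<N. L i j \<le> Lmx" unfolding Lmx_def by (auto intro!: Max_ge)
  have Lmx0: "Lmx > 0" using Lmx Lpos N0 by (meson less_le_trans)
  have Gm: "\<forall>i<N. Gamma N L i \<le> Gm" unfolding Gm_def by (auto intro!: Max_ge)
  have Gm0: "Gm \<ge> 0" using Gm Gamma_pos N0 by (meson less_imp_le order.trans)
  define cc where "cc = min 1 (lm / (2 * Lmx))"
  have cc1: "0 < cc" "cc \<le> 1" using lm0 Lmx0 by (auto simp: cc_def)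
  have "Lmx * cc \<le> Lmx * (lm / (2 * Lmx))" using Lmx0 by (intro mult_left_mono) (auto simp: cc_def)
  also have "\<dots> = lm / 2" using Lmx0 by simp
  finally have cc: "0 < cc" "cc \<le> 1" "Lmx * cc \<le> lm / 2" using cc1 by auto
  define C0 where "C0 = Gm * 4 / (cc * lm)"
  have "m2 y \<le> C0 * (\<Sum>p\<in>Pairs. F y - F (T y p))" for y
  proof -
    have 1: "m2 y \<le> Gm * (norm (dL y))^2" unfolding m2_def by (rule M2_le[OF Gm])
    have 2: "cc * lm / 2 * (norm (dL y))^2 \<le> 2 * (\<Sum>p\<in>Pairs. F y - F (T y p))"
      by (rule key_x[OF lm Lmx cc])
    have pos: "cc * lm / 2 > 0" using cc lm0 by simp
    have "(norm (dL y))^2 \<le> 2 * (\<Sum>p\<in>Pairs. F y - F (T y p)) / (cc * lm / 2)"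
      using 2 pos by (subst pos_le_divide_eq) (auto simp: mult.commute)
    also have "\<dots> = 4 / (cc * lm) * (\<Sum>p\<in>Pairs. F y - F (T y p))" by simp
    finally have "(norm (dL y))^2 \<le> 4 / (cc * lm) * (\<Sum>p\<in>Pairs. F y - F (T y p))" .
    hence "Gm * (norm (dL y))^2 \<le> Gm * (4 / (cc * lm) * (\<Sum>p\<in>Pairs. F y - F (T y p)))"
      using Gm0 by (rule mult_left_mono)
    thus ?thesis using 1 by (simp add: C0_def)
  qed
  moreover have "C0 \<ge> 0" using Gm0 cc lm0 by (simp add: C0_def)
  ultimately show ?thesis by blast
qed

lemma AE_M2:
  assumes Fl: "\<forall>y. a \<bullet> y = b \<longrightarrow> Fl \<le> F y" and x0: "a \<bullet> x0 = b"
  shows "AE \<omega> in MM. (\<lambda>k. M2 f g hc blk a N L (Z x0 \<omega> k)) \<longlonglongrightarrow> 0"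
proof -
  obtain C0 where C0: "C0 \<ge> 0" "\<forall>y. m2 y \<le> C0 * (\<Sum>p\<in>Pairs. F y - F (T y p))"
    using key_C by blast
  have mk: "(\<lambda>\<omega>. ennreal (m2 (Z x0 \<omega> k))) \<in> borel_measurable MM" for k
    by (rule measurable_compose[OF Z_meas measurable_ennreal])
  have "(\<integral>\<^sup>+\<omega>. (\<Sum>k. ennreal (m2 (Z x0 \<omega> k))) \<partial>MM) = (\<Sum>k. \<integral>\<^sup>+\<omega>. ennreal (m2 (Z x0 \<omega> k)) \<partial>MM)"
    by (rule nn_integral_suminf[OF mk])
  also have "\<dots> = (SUP n. \<Sum>k<n. \<integral>\<^sup>+\<omega>. ennreal (m2 (Z x0 \<omega> k)) \<partial>MM)" by (rule suminf_eq_SUP)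
  also have "\<dots> \<le> ennreal (real (card Pairs) * C0 * (F x0 - Fl))"
  proof (rule SUP_least)
    fix n
    have "(\<Sum>k<n. \<integral>\<^sup>+\<omega>. ennreal (m2 (Z x0 \<omega> k)) \<partial>MM) = (\<integral>\<^sup>+\<omega>. (\<Sum>k<n. ennreal (m2 (Z x0 \<omega> k))) \<partial>MM)"
      by (rule nn_integral_sum[symmetric]) (rule mk)
    also have "\<dots> = (\<integral>\<^sup>+\<omega>. ennreal (Ssum n x0 \<omega>) \<partial>MM)"
      unfolding Ssum_def by (intro nn_integral_cong sum_ennreal) (simp add: m2_nonneg)
    also have "\<dots> \<le> ennreal (real (card Pairs) * C0 * (F x0 - Fl))"
      by (rule bound[OF C0 Fl x0])
    finally show "(\<Sum>k<n. \<integral>\<^sup>+\<omega>. ennreal (m2 (Z x0 \<omega> k)) \<partial>MM) \<le> ennreal (real (card Pairs) * C0 * (F x0 - Fl))" .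
  qed
  finally have le: "(\<integral>\<^sup>+\<omega>. (\<Sum>k. ennreal (m2 (Z x0 \<omega> k))) \<partial>MM) \<le> ennreal (real (card Pairs) * C0 * (F x0 - Fl))" .
  have "(\<integral>\<^sup>+\<omega>. (\<Sum>k. ennreal (m2 (Z x0 \<omega> k))) \<partial>MM) \<noteq> \<infinity>"
    using neq_top_trans[OF ennreal_neq_top le] by simp
  hence "AE \<omega> in MM. (\<Sum>k. ennreal (m2 (Z x0 \<omega> k))) \<noteq> \<infinity>"
    by (intro nn_integral_PInf_AE) (use mk in auto)
  thus ?thesis
  proof (rule eventually_mono)
    fix \<omega> assume "(\<Sum>k. ennreal (m2 (Z x0 \<omega> k))) \<noteq> \<infinity>"
    hence "summable (\<lambda>k. m2 (Z x0 \<omega> k))"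
      by (intro summable_suminf_not_top) (auto simp: m2_nonneg)
    hence "(\<lambda>k. m2 (Z x0 \<omega> k)) \<longlonglongrightarrow> 0" by (rule summable_LIMSEQ_zero)
    hence "(\<lambda>k. sqrt (m2 (Z x0 \<omega> k))) \<longlonglongrightarrow> sqrt 0" by (rule tendsto_real_sqrt)
    moreover have "sqrt (m2 y) = M2 f g hc blk a N L y" for y
    proof -
      have "M2 f g hc blk a N L y \<ge> 0"
        unfolding M2_def wnorm_dual_def
        by (intro real_sqrt_ge_zero sum_nonneg divide_nonneg_pos) (auto simp: Gamma_pos[OF blk_lt])
      thus ?thesis unfolding m2_def by simp
    qed
    ultimately show "(\<lambda>k. M2 f g hc blk a N L (Z x0 \<omega> k)) \<longlonglongrightarrow> 0" by simp
  qed
qed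

end

lemma blk_norm_ge: "blk c \<in> B \<Longrightarrow> \<bar>v$c\<bar> \<le> blk_norm blk B (v::real^'n::finite)"
proof -
  assume c: "blk c \<in> B"
  have "(v$c)^2 \<le> (\<Sum>c'\<in>{c'. blk c' \<in> B}. (v$c')^2)"
    by (rule member_le_sum[of c "{c'. blk c' \<in> B}" "\<lambda>c'. (v$c')^2"]) (use c in auto)
  hence "sqrt ((v$c)^2) \<le> sqrt (\<Sum>c'\<in>{c'. blk c' \<in> B}. (v$c')^2)" by (rule real_sqrt_le_mono)
  thus ?thesis by (simp add: blk_norm_def)
qed

lemma sep_convex:
  assumes hconv: "\<forall>c. convex_on UNIV (hc c)" and th: "0 \<le> \<theta>" "\<theta> \<le> 1"
  shows "sep_fun hc (\<theta> *\<^sub>R u + (1 - \<theta>) *\<^sub>R v) \<le> \<theta> * sep_fun hc u + (1 - \<theta>) * sep_fun hc (v::real^'n::finite)"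
proof -
  have "hc c (\<theta> * u$c + (1 - \<theta>) * v$c) \<le> \<theta> * hc c (u$c) + (1 - \<theta>) * hc c (v$c)" for c
    using convex_onD[OF hconv[rule_format, of c], of "1 - \<theta>" "u$c" "v$c"] th by (simp add: algebra_simps)
  hence "(\<Sum>c\<in>UNIV. hc c (\<theta> * u$c + (1 - \<theta>) * v$c)) \<le> (\<Sum>c\<in>UNIV. \<theta> * hc c (u$c) + (1 - \<theta>) * hc c (v$c))"
    by (intro sum_mono) auto
  thus ?thesis unfolding sep_fun_def by (simp add: sum.distrib sum_distrib_left)
qed

lemma kkt:
  fixes H :: "real^'n::finite \<Rightarrow> real"
  assumes a0: "a \<noteq> 0"
    and cvx: "\<And>u v \<theta>. 0 \<le> \<theta> \<Longrightarrow> \<theta> \<le> 1 \<Longrightarrow> H (\<theta> *\<^sub>R u + (1 - \<theta>) *\<^sub>R v) \<le> \<theta> * H u + (1 - \<theta>) * H v"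
    and mn: "\<And>t. a \<bullet> t = 0 \<Longrightarrow> H 0 \<le> H t"
  shows "\<exists>lam. \<forall>t. H 0 - lam * (a \<bullet> t) \<le> H t"
proof -
  have cross: "(H t2 - H 0) / (a \<bullet> t2) \<le> (H t1 - H 0) / (a \<bullet> t1)"
    if t1: "a \<bullet> t1 > 0" and t2: "a \<bullet> t2 < 0" for t1 t2
  proof -
    define b1 b2 where "b1 = a \<bullet> t1" and "b2 = a \<bullet> t2"
    define A B where "A = H t1 - H 0" and "B = H t2 - H 0"
    have b: "b1 > 0" "b2 < 0" using t1 t2 by (auto simp: b1_def b2_def)
    define \<theta> where "\<theta> = - b2 / (b1 - b2)"
    have th: "0 \<le> \<theta>" "\<theta> \<le> 1" using b by (auto simp: \<theta>_def field_simps)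
    have th1: "1 - \<theta> = b1 / (b1 - b2)" using b by (simp add: \<theta>_def field_simps)
    have "a \<bullet> (\<theta> *\<^sub>R t1 + (1 - \<theta>) *\<^sub>R t2) = \<theta> * b1 + (1 - \<theta>) * b2"
      by (simp add: inner_add_right b1_def b2_def)
    also have "\<dots> = 0" unfolding th1 using b by (simp add: \<theta>_def field_simps)
    finally have "H 0 \<le> H (\<theta> *\<^sub>R t1 + (1 - \<theta>) *\<^sub>R t2)" by (rule mn)
    also have "\<dots> \<le> \<theta> * H t1 + (1 - \<theta>) * H t2" by (rule cvx[OF th])
    finally have "0 \<le> \<theta> * A + (1 - \<theta>) * B" by (simp add: A_def B_def algebra_simps)
    hence "0 \<le> (b1 - b2) * (\<theta> * A + (1 - \<theta>) * B)" using b by simp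
    also have "(b1 - b2) * (\<theta> * A + (1 - \<theta>) * B) = ((b1 - b2) * \<theta>) * A + ((b1 - b2) * (1 - \<theta>)) * B"
      by (simp add: algebra_simps)
    also have "(b1 - b2) * \<theta> = - b2" using b by (simp add: \<theta>_def)
    also have "(b1 - b2) * (1 - \<theta>) = b1" using b unfolding th1 by simp
    finally have key: "0 \<le> - b2 * A + b1 * B" .
    have "A / b1 - B / b2 = (A * b2 - B * b1) / (b1 * b2)" using b by (simp add: field_simps)
    also have "\<dots> \<ge> 0" using key b by (intro divide_nonpos_neg) (auto simp: algebra_simps mult_pos_neg)
    finally show ?thesis by (simp add: A_def B_def b1_def b2_def)
  qed
  define Down where "Down = {(H t - H 0) / (a \<bullet> t) | t. a \<bullet> t < 0}"
  have aa: "a \<bullet> a > 0" using a0 by simp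
  have ne: "Down \<noteq> {}" unfolding Down_def using aa by (auto intro!: exI[of _ "-a"])
  have up: "d \<le> (H t - H 0) / (a \<bullet> t)" if "d \<in> Down" "a \<bullet> t > 0" for d t
    using that cross unfolding Down_def by auto
  have bdd: "bdd_above Down"
    by (rule bdd_aboveI[of _ "(H a - H 0) / (a \<bullet> a)"]) (use up[of _ a] aa in auto)
  define mu where "mu = Sup Down"
  have "H 0 - (- mu) * (a \<bullet> t) \<le> H t" for t
  proof (cases "a \<bullet> t" "0::real" rule: linorder_cases)
    case less
    have "(H t - H 0) / (a \<bullet> t) \<in> Down" unfolding Down_def using less by auto
    hence "(H t - H 0) / (a \<bullet> t) \<le> mu" unfolding mu_def by (rule cSup_upper[OF _ bdd])
    hence "mu * (a \<bullet> t) \<le> H t - H 0" using less by (simp add: divide_le_eq)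
    thus ?thesis by simp
  next
    case equal thus ?thesis using mn[of t] by simp
  next
    case greater
    have "mu \<le> (H t - H 0) / (a \<bullet> t)" unfolding mu_def by (rule cSup_least[OF ne]) (rule up[OF _ greater])
    hence "mu * (a \<bullet> t) \<le> H t - H 0" using greater by (simp add: le_divide_eq)
    thus ?thesis by simp
  qed
  thus ?thesis by blast
qed

context rcd begin

definition proj where "proj n s = (\<chi> c. if blk c < n then s$c else (0::real))"

lemma g_cont: "continuous_on UNIV g"
proof -
  define Lmx where "Lmx = Max ((\<lambda>(i,j). L i j) ` ({..<N} \<times> {..<N}))"
  have Lmx: "\<forall>i<N. \<forall>j<N. L i j \<le> Lmx" unfolding Lmx_def by (auto intro!: Max_ge)
  have N0: "0 < N" using N2 by simp
  have Lmx0: "Lmx \<ge> 0" using Lmx Lpos N0 by (meson less_le_trans less_imp_le)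
  have one: "\<bar>(g (x + s) - g x)$c\<bar> \<le> Lmx * norm s" if i: "i < N" and s: "supported_in blk {i} s" for i x s c
  proof -
    have s2: "supported_in blk {i, blk c} s" using s by (auto simp: supported_in_def)
    have "\<bar>(g (x + s) - g x)$c\<bar> \<le> blk_norm blk {i, blk c} (g (x + s) - g x)"
      by (rule blk_norm_ge) simp
    also have "\<dots> \<le> L i (blk c) * norm s" using Lip i blk_lt s2 by blast
    also have "\<dots> \<le> Lmx * norm s" using Lmx i blk_lt by (intro mult_right_mono) auto
    finally show ?thesis .
  qed
  have ind: "\<bar>(g (x + proj n s) - g x)$c\<bar> \<le> real n * Lmx * norm s" for n x s c
  proof (induction n arbitrary: x)
    case 0
    have "proj 0 s = 0" by (simp add: proj_def vec_eq_iff)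
    thus ?case by simp
  next
    case (Suc n)
    define sg where "sg = (\<chi> c. if blk c = n then s$c else (0::real))"
    have ps: "proj (Suc n) s = proj n s + sg" by (auto simp: proj_def sg_def vec_eq_iff)
    have nsg: "norm sg \<le> norm s"
    proof -
      have "(norm sg)^2 \<le> (norm s)^2" unfolding norm_sq_vec sg_def by (intro sum_mono) auto
      thus ?thesis by (rule power2_le_imp_le) simp
    qed
    have d1: "\<bar>(g (x + proj n s + sg) - g (x + proj n s))$c\<bar> \<le> Lmx * norm s"
    proof (cases "n < N")
      case True
      have "supported_in blk {n} sg" by (simp add: supported_in_def sg_def)
      hence "\<bar>(g (x + proj n s + sg) - g (x + proj n s))$c\<bar> \<le> Lmx * norm sg" by (rule one[OF True])
      also have "\<dots> \<le> Lmx * norm s" using nsg Lmx0 by (rule mult_left_mono)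
      finally show ?thesis .
    next
      case False
      have "sg = 0" using False blk_lt by (auto simp: sg_def vec_eq_iff)
      thus ?thesis using Lmx0 by simp
    qed
    have "(g (x + proj (Suc n) s) - g x)$c = (g (x + proj n s + sg) - g (x + proj n s))$c + (g (x + proj n s) - g x)$c"
      by (simp add: ps add.assoc)
    hence "\<bar>(g (x + proj (Suc n) s) - g x)$c\<bar> \<le> Lmx * norm s + real n * Lmx * norm s"
      using d1 Suc.IH[of x] by linarith
    thus ?case by (simp add: algebra_simps)
  qed
  have pN: "proj N s = s" for s using blk_lt by (simp add: proj_def vec_eq_iff)
  have "(real CARD('n) * (real N * Lmx))-lipschitz_on UNIV g"
  proof (rule lipschitz_onI)
    fix x y :: "real^'n"
    have "dist (g x) (g y) = norm (g (y + (x - y)) - g y)" by (simp add: dist_norm)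
    also have "\<dots> \<le> (\<Sum>c\<in>UNIV. \<bar>(g (y + (x - y)) - g y)$c\<bar>)" by (rule norm_le_l1_cart)
    also have "\<dots> \<le> (\<Sum>c\<in>(UNIV::'n set). real N * Lmx * norm (x - y))"
      by (intro sum_mono) (use ind[of y N "x - y"] pN in auto)
    also have "\<dots> = real CARD('n) * (real N * Lmx) * dist x y" by (simp add: dist_norm)
    finally show "dist (g x) (g y) \<le> real CARD('n) * (real N * Lmx) * dist x y" .
    show "0 \<le> real CARD('n) * (real N * Lmx)" using Lmx0 by simp
  qed
  thus ?thesis by (rule lipschitz_on_continuous_on)
qed

end

context rcd begin

lemma M2_ge:
  assumes "\<forall>i<N. Gm \<le> Gamma N L i"
  shows "Gm * (norm (dL x))^2 \<le> m2 x"
proof -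
  have dd: "d_Lam f g hc blk a (\<lambda>i. real N * Gamma N L i) x = dL x"
    by (simp add: dL_def Lam_def[abs_def])
  have gp: "Gamma N L (blk c) > 0" for c by (rule Gamma_pos[OF blk_lt])
  have "m2 x = (\<Sum>c\<in>UNIV. (Gamma N L (blk c) * dL x $ c)^2 / Gamma N L (blk c))"
    unfolding m2_def M2_def wnorm_dual_def Dmat_def dd
    by (subst real_sqrt_pow2) (auto intro!: sum_nonneg simp: gp less_imp_le)
  also have "\<dots> = (\<Sum>c\<in>UNIV. Gamma N L (blk c) * (dL x $ c)^2)"
    using gp by (intro sum.cong refl) (simp add: power2_eq_square field_simps)
  finally have e: "m2 x = (\<Sum>c\<in>UNIV. Gamma N L (blk c) * (dL x $ c)^2)" .
  have "(\<Sum>c\<in>UNIV. Gm * (dL x $ c)^2) \<le> (\<Sum>c\<in>UNIV. Gamma N L (blk c) * (dL x $ c)^2)"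
    using assms blk_lt by (intro sum_mono mult_right_mono) auto
  thus ?thesis unfolding e by (simp add: norm_sq_vec sum_distrib_left)
qed

lemma stat_limit:
  assumes a0: "a \<noteq> 0" and xk: "xk \<longlonglongrightarrow> xs" and dk: "(\<lambda>k. dL (xk k)) \<longlonglongrightarrow> 0"
    and feas: "\<forall>k. a \<bullet> xk k = b"
  shows "stationary g (sep_fun hc) a b xs"
proof -
  have "(\<lambda>k. a \<bullet> xk k) \<longlonglongrightarrow> a \<bullet> xs" by (intro tendsto_intros xk)
  hence "(\<lambda>k. b) \<longlonglongrightarrow> a \<bullet> xs" using feas by simp
  hence axs: "a \<bullet> xs = b" using LIMSEQ_unique tendsto_const by blast
  have cf: "isCont f xs" using grad has_derivative_continuous by blast
  have cg: "isCont g xs" using g_cont by (simp add: continuous_on_eq_continuous_at)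
  have ch: "isCont (sep_fun hc) z" for z using sep_fun_cont[OF hconv] by (simp add: continuous_on_eq_continuous_at)
  have phiL_eq: "phiL y s = f y + g y \<bullet> s + 1/2 * (\<Sum>c\<in>UNIV. Lam (blk c) * (s$c)^2) + sep_fun hc (y + s)" for y s
    by (simp add: phiL_def wnorm_sq)
  have lim: "(\<lambda>k. phiL (xk k) (sk k)) \<longlonglongrightarrow> phiL xs s" if sk: "sk \<longlonglongrightarrow> s" for sk s
  proof -
    have "(\<lambda>k. f (xk k) + g (xk k) \<bullet> sk k + 1/2 * (\<Sum>c\<in>UNIV. Lam (blk c) * (sk k$c)^2) + sep_fun hc (xk k + sk k))
        \<longlonglongrightarrow> f xs + g xs \<bullet> s + 1/2 * (\<Sum>c\<in>UNIV. Lam (blk c) * (s$c)^2) + sep_fun hc (xs + s)"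
      by (intro tendsto_add tendsto_inner tendsto_mult tendsto_const tendsto_sum tendsto_power tendsto_vec_nth
          isCont_tendsto_compose[OF cf xk] isCont_tendsto_compose[OF cg xk] sk
          isCont_tendsto_compose[OF ch tendsto_add[OF xk sk]])
    thus ?thesis by (simp add: phiL_eq)
  qed
  have opt0: "phiL xs 0 \<le> phiL xs t" if at: "a \<bullet> t = 0" for t
  proof (rule LIMSEQ_le[OF lim[OF dk] lim[OF tendsto_const]])
    show "\<exists>N. \<forall>n\<ge>N. phiL (xk n) (dL (xk n)) \<le> phiL (xk n) t" using dL_opt at by auto
  qed
  define H where "H t = g xs \<bullet> t + sep_fun hc (xs + t)" for t
  have cvx: "H (\<theta> *\<^sub>R u + (1 - \<theta>) *\<^sub>R v) \<le> \<theta> * H u + (1 - \<theta>) * H v" if th: "0 \<le> \<theta>" "\<theta> \<le> 1" for u v \<theta>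
  proof -
    have "xs + (\<theta> *\<^sub>R u + (1 - \<theta>) *\<^sub>R v) = \<theta> *\<^sub>R (xs + u) + (1 - \<theta>) *\<^sub>R (xs + v)"
      by (simp add: algebra_simps)
    hence "sep_fun hc (xs + (\<theta> *\<^sub>R u + (1 - \<theta>) *\<^sub>R v)) \<le> \<theta> * sep_fun hc (xs + u) + (1 - \<theta>) * sep_fun hc (xs + v)"
      using sep_convex[OF hconv th] by simp
    thus ?thesis by (simp add: H_def inner_add_right algebra_simps)
  qed
  have mn: "H 0 \<le> H t" if at: "a \<bullet> t = 0" for t
  proof -
    define W where "W = (wnorm blk Lam t)^2"
    have W0: "W \<ge> 0" by (simp add: W_def)
    have step: "sep_fun hc xs \<le> H t + \<epsilon> * W" if e: "0 < \<epsilon>" "\<epsilon> \<le> 1" for \<epsilon>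
    proof -
      have "phiL xs 0 \<le> phiL xs (\<epsilon> *\<^sub>R t)" by (rule opt0) (simp add: at)
      moreover have "(wnorm blk Lam (\<epsilon> *\<^sub>R t))^2 = \<epsilon>^2 * W"
        by (simp add: wnorm_sq W_def sum_distrib_left power_mult_distrib algebra_simps)
      moreover have "(wnorm blk Lam 0)^2 = 0" by (simp add: wnorm_sq)
      ultimately have 1: "sep_fun hc xs \<le> \<epsilon> * (g xs \<bullet> t) + 1/2 * (\<epsilon>^2 * W) + sep_fun hc (xs + \<epsilon> *\<^sub>R t)"
        by (simp add: phiL_def)
      have "xs + \<epsilon> *\<^sub>R t = \<epsilon> *\<^sub>R (xs + t) + (1 - \<epsilon>) *\<^sub>R xs" by (simp add: algebra_simps)
      hence "sep_fun hc (xs + \<epsilon> *\<^sub>R t) \<le> \<epsilon> * sep_fun hc (xs + t) + (1 - \<epsilon>) * sep_fun hc xs"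
        using sep_convex[OF hconv, of \<epsilon> "xs + t" xs] e by simp
      with 1 have "\<epsilon> * sep_fun hc xs \<le> \<epsilon> * (H t + \<epsilon> / 2 * W)"
        by (simp add: H_def algebra_simps power2_eq_square)
      hence "sep_fun hc xs \<le> H t + \<epsilon> / 2 * W" using e by simp
      moreover have "\<epsilon> / 2 * W \<le> \<epsilon> * W" using e W0 by (intro mult_right_mono) auto
      ultimately show ?thesis by linarith
    qed
    have "sep_fun hc xs \<le> H t"
    proof (rule field_le_epsilon)
      fix e :: real assume e: "0 < e"
      define \<epsilon> where "\<epsilon> = min 1 (e / (W + 1))"
      have ep: "0 < \<epsilon>" "\<epsilon> \<le> 1" using e W0 by (auto simp: \<epsilon>_def)
      have "\<epsilon> * W \<le> \<epsilon> * (W + 1)" using ep by simp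
      also have "\<dots> \<le> e / (W + 1) * (W + 1)" using ep W0 by (intro mult_right_mono) (auto simp: \<epsilon>_def)
      also have "\<dots> = e" using W0 by simp
      finally show "sep_fun hc xs \<le> H t + e" using step[OF ep] by simp
    qed
    thus ?thesis by (simp add: H_def)
  qed
  obtain lam where lam: "\<forall>t. H 0 - lam * (a \<bullet> t) \<le> H t" using kkt[OF a0 cvx mn] by blast
  define v where "v = - g xs - lam *\<^sub>R a"
  have "v \<in> subdiff (sep_fun hc) xs"
    unfolding subdiff_def
  proof (intro CollectI allI)
    fix y
    have "H 0 - lam * (a \<bullet> (y - xs)) \<le> H (y - xs)" using lam by blast
    thus "sep_fun hc xs + v \<bullet> (y - xs) \<le> sep_fun hc y"
      by (simp add: H_def v_def inner_diff_left algebra_simps)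
  qed
  moreover have "g xs + v + lam *\<^sub>R a = 0" by (simp add: v_def)
  ultimately show ?thesis unfolding stationary_def using axs by blast
qed

end

theorem theorem3:
  fixes f :: "real^'n \<Rightarrow> real" and g :: "real^'n \<Rightarrow> real^'n"
    and hc :: "'n \<Rightarrow> real \<Rightarrow> real" and blk :: "'n \<Rightarrow> nat" and N :: nat
    and L :: "nat \<Rightarrow> nat \<Rightarrow> real" and a x0 :: "real^'n" and b :: real
  assumes N2: "N \<ge> 2" and blocks: "blk ` UNIV = {..<N}"
    and grad: "\<forall>x. (f has_derivative (\<lambda>v. g x \<bullet> v)) (at x)"
    and Lpos: "\<forall>i<N. \<forall>j<N. L i j = L j i \<and> L i j > 0"
    and Lip: "\<forall>i<N. \<forall>j<N. \<forall>x s. supported_in blk {i, j} s \<longrightarrow>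
               blk_norm blk {i, j} (g (x + s) - g x) \<le> L i j * norm s"
    and hconv: "\<forall>c. convex_on UNIV (hc c)"
    and a0: "a \<noteq> 0" and feas: "a \<bullet> x0 = b"
    and Fbdd: "bdd_below ((\<lambda>x. f x + sep_fun hc x) ` {x. a \<bullet> x = b})"
  defines "M \<equiv> stream_space (measure_pmf (pmf_of_set {{i, j} | i j. i < N \<and> j < N \<and> i \<noteq> j}))"
    and "X \<equiv> rcd_iter f g hc L blk a x0"
  shows "(AE \<omega> in M. (\<lambda>k. M2 f g hc blk a N L (X \<omega> k)) \<longlonglongrightarrow> 0)
       \<and> (\<exists>Fbar. Fbar \<in> borel_measurable M \<and>
            (AE \<omega> in M. (\<lambda>k. f (X \<omega> k) + sep_fun hc (X \<omega> k)) \<longlonglongrightarrow> Fbar \<omega>))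
       \<and> (AE \<omega> in M. \<forall>xs. (\<exists>r. strict_mono r \<and> (X \<omega> \<circ> r) \<longlonglongrightarrow> xs) \<longrightarrow>
            stationary g (sep_fun hc) a b xs)"
proof -
  interpret R: rcd f g hc blk N L a
    by unfold_locales (use N2 blocks grad Lpos Lip hconv in auto)
  obtain Fl where Fl: "\<forall>y. a \<bullet> y = b \<longrightarrow> Fl \<le> R.F y"
    using Fbdd unfolding bdd_below_def R.F_def by auto
  have MM: "M = R.MM" unfolding M_def R.MM_def R.QQ_def R.Pairs_def ..
  have valid: "AE \<omega> in M. \<forall>k. \<omega> !! k \<in> R.Pairs"
  proof -
    have "AE \<omega> in stream_space (measure_pmf (pmf_of_set R.Pairs)). stream_all (\<lambda>p. p \<in> R.Pairs) \<omega>"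
      by (rule prob_space.AE_stream_all[OF prob_space_measure_pmf])
         (auto simp: AE_measure_pmf_iff set_pmf_of_set[OF R.Pairs_nonempty R.Pairs_finite] pred_def)
    thus ?thesis unfolding MM R.MM_def R.QQ_def stream_all_def .
  qed
  have XZ: "X \<omega> k = R.Z x0 \<omega> k" if v: "\<forall>k. \<omega> !! k \<in> R.Pairs" for \<omega> k
  proof (induction k)
    case 0 thus ?case by (simp add: X_def)
  next
    case (Suc k)
    thus ?case using v by (simp add: X_def R.T_def R.dir_def R.clamp_id Let_def)
  qed
  have aem: "AE \<omega> in M. (\<lambda>k. M2 f g hc blk a N L (R.Z x0 \<omega> k)) \<longlonglongrightarrow> 0"
    unfolding MM by (rule R.AE_M2[OF Fl feas])
  have part1: "AE \<omega> in M. (\<lambda>k. M2 f g hc blk a N L (X \<omega> k)) \<longlonglongrightarrow> 0"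
    using valid aem by eventually_elim (simp add: XZ)
  define Fbar where "Fbar \<omega> = lim (\<lambda>k. R.F (R.Z x0 \<omega> k))" for \<omega>
  have Fm: "Fbar \<in> borel_measurable M"
    unfolding Fbar_def MM by (intro borel_measurable_lim_metric R.Z_meas)
  have Fconv: "(\<lambda>k. R.F (R.Z x0 \<omega> k)) \<longlonglongrightarrow> Fbar \<omega>" for \<omega>
  proof -
    have "decseq (\<lambda>k. R.F (R.Z x0 \<omega> k))" by (rule decseq_SucI) (rule R.Z_dec)
    moreover have "\<forall>k. Fl \<le> R.F (R.Z x0 \<omega> k)" using Fl R.Z_feas feas by auto
    ultimately obtain l where "(\<lambda>k. R.F (R.Z x0 \<omega> k)) \<longlonglongrightarrow> l" by (rule decseq_convergent)
    hence "convergent (\<lambda>k. R.F (R.Z x0 \<omega> k))" by (auto simp: convergent_def)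
    thus ?thesis unfolding Fbar_def by (simp add: convergent_LIMSEQ_iff)
  qed
  have part2: "AE \<omega> in M. (\<lambda>k. f (X \<omega> k) + sep_fun hc (X \<omega> k)) \<longlonglongrightarrow> Fbar \<omega>"
    using valid by eventually_elim (use Fconv in \<open>simp add: XZ R.F_def\<close>)
  define Gmin where "Gmin = Min (Gamma N L ` {..<N})"
  have N0: "0 < N" using N2 by simp
  have Gmin0: "Gmin > 0" unfolding Gmin_def using N0 R.Gamma_pos by (subst Min_gr_iff) auto
  have Gmin: "\<forall>i<N. Gmin \<le> Gamma N L i" unfolding Gmin_def by (auto intro: Min_le)
  have part3: "AE \<omega> in M. \<forall>xs. (\<exists>r. strict_mono r \<and> (X \<omega> \<circ> r) \<longlonglongrightarrow> xs) \<longrightarrow>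
            stationary g (sep_fun hc) a b xs"
    using valid aem
  proof eventually_elim
    case (elim \<omega>)
    show ?case
    proof (intro allI impI)
      fix xs assume "\<exists>r. strict_mono r \<and> (X \<omega> \<circ> r) \<longlonglongrightarrow> xs"
      then obtain r where r: "strict_mono r" "(X \<omega> \<circ> r) \<longlonglongrightarrow> xs" by blast
      define xk where "xk k = R.Z x0 \<omega> (r k)" for k
      have xk: "xk \<longlonglongrightarrow> xs" using r(2) elim(1) by (simp add: xk_def[abs_def] comp_def XZ)
      have mk: "(\<lambda>k. M2 f g hc blk a N L (xk k)) \<longlonglongrightarrow> 0"
        using LIMSEQ_subseq_LIMSEQ[OF elim(2) r(1)] by (simp add: xk_def[abs_def] comp_def)
      have lim0: "(\<lambda>k. M2 f g hc blk a N L (xk k) / sqrt Gmin) \<longlonglongrightarrow> 0"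
        by (rule tendsto_divide_zero[OF mk])
      have nb: "norm (R.dL y) \<le> M2 f g hc blk a N L y / sqrt Gmin" for y
      proof -
        have "Gmin * (norm (R.dL y))^2 \<le> R.m2 y" by (rule R.M2_ge[OF Gmin])
        hence 1: "sqrt (Gmin * (norm (R.dL y))^2) \<le> sqrt (R.m2 y)" by (rule real_sqrt_le_mono)
        have M0: "M2 f g hc blk a N L y \<ge> 0"
          unfolding M2_def wnorm_dual_def
          by (intro real_sqrt_ge_zero sum_nonneg divide_nonneg_pos) (auto simp: R.Gamma_pos[OF R.blk_lt])
        have 2: "sqrt (R.m2 y) = M2 f g hc blk a N L y"
          unfolding R.m2_def using M0 by (rule real_sqrt_unique[OF refl])
        have 3: "sqrt (Gmin * (norm (R.dL y))^2) = sqrt Gmin * norm (R.dL y)"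
          by (simp add: real_sqrt_mult)
        have "sqrt Gmin * norm (R.dL y) \<le> M2 f g hc blk a N L y" using 1 unfolding 2 3 .
        moreover have "sqrt Gmin > 0" using Gmin0 by simp
        ultimately show ?thesis by (simp add: pos_le_divide_eq mult.commute)
      qed
      have ev: "\<forall>k. norm (R.dL (xk k)) \<le> M2 f g hc blk a N L (xk k) / sqrt Gmin" using nb by blast
      have "(\<lambda>k. R.dL (xk k)) \<longlonglongrightarrow> 0"
        by (rule Lim_null_comparison[OF always_eventually[OF ev] lim0])
      moreover have "\<forall>k. a \<bullet> xk k = b" using R.Z_feas feas by (simp add: xk_def)
      ultimately show "stationary g (sep_fun hc) a b xs" by (rule R.stat_limit[OF a0 xk])
    qed
  qed
  show ?thesis using part1 part2 part3 Fm by blast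
qed

end
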